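(* Let $n\in\mathbb N$, $w>0$, $\overrightarrow{P}=(p_1,\dots,p_n)$ with $1\le p_1\le\cdots\le p_n<\infty$, and let $\chi$ be a kernel. For $f\in\Delta^{\overrightarrow P}(\mathbb R^n)$ define the generalized sampling operator $S_w(f)(\mathbf x)=\sum_{\mathbf k\in\mathbb Z^n}f\big(\tfrac{\mathbf k}{w}\big)\chi(w\mathbf x-\mathbf k)$, $\mathbf x\in\mathbb R^n$. Then $S_w$ maps $\Delta^{\overrightarrow P}(\mathbb R^n)$ into $L^{\overrightarrow P}(\mathbb R^n)$ and $$\|S_wf\|_{\overrightarrow P}\le (m_0(\chi))^{1-\frac1{p_n}}\,\|\chi\|_1^{\frac1{p_n}}\,\Big\|\Big(f\big(\tfrac{\mathbf k}{w}\big)\Big)_{\mathbf k\in\mathbb Z^n}\Big\|_{\ell^{\overrightarrow P}_w}.$$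
   Context: A kernel is a function $\chi:\mathbb R^n\to\mathbb R$ with $\chi\in L^1(\mathbb R^n)$, bounded in a neighborhood of the origin, such that $\sum_{\mathbf k\in\mathbb Z^n}\chi(\mathbf u-\mathbf k)=1$ for every $\mathbf u\in\mathbb R^n$, and for a fixed $\alpha\ge0$ the absolute moment $m_\alpha(\chi):=\sup_{\mathbf u\in\mathbb R^n}\sum_{\mathbf k\in\mathbb Z^n}|\chi(\mathbf u-\mathbf k)|\,\|\mathbf u-\mathbf k\|_2^\alpha$ is finite; $m_0(\chi)=\sup_{\mathbf u}\sum_{\mathbf k}|\chi(\mathbf u-\mathbf k)|$. $L^{\overrightarrow P}(\mathbb R^n)$ is the space of measurable $f$ with $\|f\|_{\overrightarrow P}=\Big(\int_{\mathbb R}\cdots\Big(\int_{\mathbb R}\Big(\int_{\mathbb R}|f(x_1,\dots,x_n)|^{p_1}dx_1\Big)^{p_2/p_1}dx_2\Big)^{p_3/p_2}\cdots dx_n\Big)^{1/p_n}<\infty$. For a sequence $x$ on $\mathbb Z^n$, $\|x\|_{\ell^{\overrightarrow P}_w}=\Big(\frac1w\sum_{k_n}\cdots\Big(\frac1w\sum_{k_2}\Big(\frac1w\sum_{k_1}|x(k_1,\dots,k_n)|^{p_1}\Big)^{p_2/p_1}\Big)^{p_3/p_2}\cdots\Big)^{1/p_n}$. A countable set $\Gamma\subset\mathbb R^n$ is relatively separated with gap $\kappa>0$ if $1\le\inf_{\mathbf x}\sum_{\gamma\in\Gamma}\chi_{B(\gamma;\kappa/2)}(\mathbf x)$ and $\sup_{\mathbf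 x}\sum_{\gamma\in\Gamma}\chi_{B(\gamma;\kappa/2)}(\mathbf x)<\infty$, $B(\gamma;r)$ the open cube centered at $\gamma$ of side $2r$. $\Delta^{\overrightarrow P}(\mathbb R^n)$ is the set of bounded measurable $f:\mathbb R^n\to\mathbb R$ such that $\|(f(x_{\mathbf k}))_{\mathbf k\in\mathbb Z^n}\|_{\ell^{\overrightarrow P}_w}<\infty$ for every relatively separated set $(x_{\mathbf k})_{\mathbf k\in\mathbb Z^n}$. *)

theory Defs
  imports "HOL-Analysis.Analysis"
begin

text \<open>A point of R^n is a function x :: nat => real lying in
  PiE {..<n} (\<lambda>_. UNIV), i.e. coordinates x 0, ..., x (n-1) (coordinate i
  corresponds to x_(i+1) of the paper) and x i = undefined for i >= n.
  Lattice points of Z^n are likewise functions nat => int in PiE {..<n} (\<lambda>_. UNIV).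
  The exponent vector P = (p_1,...,p_n) is given by P 0, ..., P (n-1).\<close>

definition Rn :: "nat \<Rightarrow> (nat \<Rightarrow> real) set" where
  "Rn n = PiE {..<n} (\<lambda>_. UNIV)"

definition Zn :: "nat \<Rightarrow> (nat \<Rightarrow> int) set" where
  "Zn n = PiE {..<n} (\<lambda>_. UNIV)"

definition lebesgue_n :: "nat \<Rightarrow> (nat \<Rightarrow> real) measure" where
  "lebesgue_n n = completion (PiM {..<n} (\<lambda>_. lborel))"

definition epowr :: "ennreal \<Rightarrow> real \<Rightarrow> ennreal" where
  "epowr a p = (if p = 0 then 1 else if a = \<infinity> then \<infinity> else ennreal (enn2real a powr p))"

definition lat_div :: "nat \<Rightarrow> real \<Rightarrow> (nat \<Rightarrow> int) \<Rightarrow> (nat \<Rightarrow> real)" where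
  "lat_div n w k = restrict (\<lambda>i. real_of_int (k i) / w) {..<n}"

definition pt_minus :: "nat \<Rightarrow> (nat \<Rightarrow> real) \<Rightarrow> (nat \<Rightarrow> int) \<Rightarrow> (nat \<Rightarrow> real)" where
  "pt_minus n u k = restrict (\<lambda>i. u i - real_of_int (k i)) {..<n}"

definition pt_scale :: "nat \<Rightarrow> real \<Rightarrow> (nat \<Rightarrow> real) \<Rightarrow> (nat \<Rightarrow> real)" where
  "pt_scale n w x = restrict (\<lambda>i. w * x i) {..<n}"

definition norm2_n :: "nat \<Rightarrow> (nat \<Rightarrow> real) \<Rightarrow> real" where
  "norm2_n n x = sqrt (\<Sum>i<n. (x i)\<^sup>2)"

text \<open>Mixed Lebesgue norm ||f||_P (iterated integrals, innermost over x_1).\<close>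
fun mixnorm_aux :: "nat \<Rightarrow> (nat \<Rightarrow> real) \<Rightarrow> ((nat \<Rightarrow> real) \<Rightarrow> real) \<Rightarrow> nat \<Rightarrow> (nat \<Rightarrow> real) \<Rightarrow> ennreal" where
  "mixnorm_aux n P f 0 x = ennreal \<bar>f x\<bar>"
| "mixnorm_aux n P f (Suc j) x =
     epowr (\<integral>\<^sup>+ t. epowr (mixnorm_aux n P f j (x(j := t))) (P j) \<partial>lborel) (1 / P j)"

definition mixnorm :: "nat \<Rightarrow> (nat \<Rightarrow> real) \<Rightarrow> ((nat \<Rightarrow> real) \<Rightarrow> real) \<Rightarrow> ennreal" where
  "mixnorm n P f = mixnorm_aux n P f n (restrict (\<lambda>_. 0) {..<n})"

definition in_LP :: "nat \<Rightarrow> (nat \<Rightarrow> real) \<Rightarrow> ((nat \<Rightarrow> real) \<Rightarrow> real) \<Rightarrow> bool" where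
  "in_LP n P f \<longleftrightarrow> f \<in> borel_measurable (lebesgue_n n) \<and> mixnorm n P f < \<infinity>"

text \<open>Weighted mixed sequence norm ||x||_(l^P_w) (innermost sum over k_1).\<close>
fun seqnorm_aux :: "nat \<Rightarrow> (nat \<Rightarrow> real) \<Rightarrow> real \<Rightarrow> ((nat \<Rightarrow> int) \<Rightarrow> real) \<Rightarrow> nat \<Rightarrow> (nat \<Rightarrow> int) \<Rightarrow> ennreal" where
  "seqnorm_aux n P w a 0 k = ennreal \<bar>a k\<bar>"
| "seqnorm_aux n P w a (Suc j) k =
     epowr (ennreal (1 / w) * (\<integral>\<^sup>+ m. epowr (seqnorm_aux n P w a j (k(j := m))) (P j) \<partial>count_space UNIV)) (1 / P j)"

definition seqnorm :: "nat \<Rightarrow> (nat \<Rightarrow> real) \<Rightarrow> real \<Rightarrow> ((nat \<Rightarrow> int) \<Rightarrow> real) \<Rightarrow> ennreal" where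
  "seqnorm n P w a = seqnorm_aux n P w a n (restrict (\<lambda>_. 0) {..<n})"

definition cube :: "nat \<Rightarrow> (nat \<Rightarrow> real) \<Rightarrow> real \<Rightarrow> (nat \<Rightarrow> real) set" where
  "cube n g r = {y \<in> Rn n. \<forall>i<n. \<bar>y i - g i\<bar> < r}"

text \<open>A family (x_k)_{k in Z^n} is relatively separated (with some gap kappa > 0).
  The sum of indicator functions is the number of indices k with x in the cube.\<close>
definition rel_separated :: "nat \<Rightarrow> ((nat \<Rightarrow> int) \<Rightarrow> (nat \<Rightarrow> real)) \<Rightarrow> bool" where
  "rel_separated n X \<longleftrightarrow> (\<forall>k\<in>Zn n. X k \<in> Rn n) \<and>
     (\<exists>\<kappa>>0. (\<forall>x\<in>Rn n. 1 \<le> (\<integral>\<^sup>+ k. indicator (cube n (X k) (\<kappa>/2)) x \<partial>count_space (Zn n)))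
            \<and> (SUP x\<in>Rn n. (\<integral>\<^sup>+ k. indicator (cube n (X k) (\<kappa>/2)) x \<partial>count_space (Zn n))) < \<infinity>)"

definition Delta :: "nat \<Rightarrow> (nat \<Rightarrow> real) \<Rightarrow> real \<Rightarrow> ((nat \<Rightarrow> real) \<Rightarrow> real) \<Rightarrow> bool" where
  "Delta n P w f \<longleftrightarrow> f \<in> borel_measurable (lebesgue_n n) \<and>
     (\<exists>M. \<forall>x\<in>Rn n. \<bar>f x\<bar> \<le> M) \<and>
     (\<forall>X. rel_separated n X \<longrightarrow> seqnorm n P w (\<lambda>k. f (X k)) < \<infinity>)"

definition abs_moment :: "nat \<Rightarrow> real \<Rightarrow> ((nat \<Rightarrow> real) \<Rightarrow> real) \<Rightarrow> ennreal" where
  "abs_moment n \<alpha> K = (SUP u\<in>Rn n. (\<integral>\<^sup>+ k.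
      ennreal (\<bar>K (pt_minus n u k)\<bar> *
        (if \<alpha> = 0 then 1 else norm2_n n (pt_minus n u k) powr \<alpha>)) \<partial>count_space (Zn n)))"

definition is_kernel :: "nat \<Rightarrow> real \<Rightarrow> ((nat \<Rightarrow> real) \<Rightarrow> real) \<Rightarrow> bool" where
  "is_kernel n \<alpha> K \<longleftrightarrow>
     integrable (lebesgue_n n) K \<and>
     (\<exists>\<delta>>0. \<exists>M. \<forall>u\<in>Rn n. (\<forall>i<n. \<bar>u i\<bar> < \<delta>) \<longrightarrow> \<bar>K u\<bar> \<le> M) \<and>
     (\<forall>u\<in>Rn n. ((\<lambda>k. K (pt_minus n u k)) has_sum 1) (Zn n)) \<and>
     abs_moment n \<alpha> K < \<infinity>"

definition L1norm :: "nat \<Rightarrow> ((nat \<Rightarrow> real) \<Rightarrow> real) \<Rightarrow> ennreal" where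
  "L1norm n K = (\<integral>\<^sup>+ x. ennreal \<bar>K x\<bar> \<partial>lebesgue_n n)"

definition sampling :: "nat \<Rightarrow> real \<Rightarrow> ((nat \<Rightarrow> real) \<Rightarrow> real) \<Rightarrow> ((nat \<Rightarrow> real) \<Rightarrow> real) \<Rightarrow> (nat \<Rightarrow> real) \<Rightarrow> real" where
  "sampling n w K f x = (\<Sum>\<^sub>\<infinity> k\<in>Zn n. f (lat_div n w k) * K (pt_minus n (pt_scale n w x) k))"

end

theory Submission
  imports Defs
begin


lemma epowr_0[simp]: "epowr a 0 = 1" by (simp add: epowr_def)

lemma epowr_top: "p \<noteq> 0 \<Longrightarrow> epowr \<infinity> p = \<infinity>" by (simp add: epowr_def)

lemma epowr_fin: "p \<noteq> 0 \<Longrightarrow> a \<noteq> \<infinity> \<Longrightarrow> epowr a p = ennreal (enn2real a powr p)"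
  by (simp add: epowr_def)

lemma epowr_ennreal: "p \<noteq> 0 \<Longrightarrow> c \<ge> 0 \<Longrightarrow> epowr (ennreal c) p = ennreal (c powr p)"
  by (simp add: epowr_def)

lemma epowr_1[simp]: "epowr a 1 = a"
  by (cases a) (auto simp: epowr_def)

lemma epowr_one_base[simp]: "epowr 1 p = 1"
  by (simp add: epowr_def)

lemma epowr_zero_base: "p \<noteq> 0 \<Longrightarrow> epowr 0 p = 0"
  by (simp add: epowr_def)

lemma epowr_finite: "a \<noteq> \<infinity> \<Longrightarrow> epowr a p \<noteq> \<infinity>"
  by (simp add: epowr_def)

lemma epowr_epowr:
  assumes "p \<ge> 0" "q \<ge> 0"
  shows "epowr (epowr a p) q = epowr a (p * q)"
proof (cases "p = 0 \<or> q = 0")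
  case True then show ?thesis by (auto simp: epowr_def)
next
  case False
  then have "p > 0" "q > 0" using assms by auto
  show ?thesis
  proof (cases "a = \<infinity>")
    case True then show ?thesis using False by (simp add: epowr_def)
  next
    case False
    then show ?thesis using \<open>p>0\<close> \<open>q>0\<close> by (simp add: epowr_def powr_powr)
  qed
qed

lemma epowr_inv1: "p > 0 \<Longrightarrow> epowr (epowr a (1/p)) p = a"
  by (subst epowr_epowr) auto

lemma epowr_inv2: "p > 0 \<Longrightarrow> epowr (epowr a p) (1/p) = a"
  by (subst epowr_epowr) auto

lemma epowr_mono:
  assumes "a \<le> b" "p \<ge> 0"
  shows "epowr a p \<le> epowr b p"
proof (cases "p = 0")
  case True then show ?thesis by simp
next
  case False
  show ?thesis
  proof (cases "b = \<infinity>")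
    case True then show ?thesis using False by (simp add: epowr_def)
  next
    case False
    then have "a \<noteq> \<infinity>" using assms top.extremum_unique by fastforce
    then show ?thesis using False \<open>p \<noteq> 0\<close> assms
      by (auto simp: epowr_def top.not_eq_extremum intro!: ennreal_leI powr_mono2 enn2real_mono)
  qed
qed

lemma epowr_mult:
  assumes "p \<ge> 0"
  shows "epowr (a * b) p = epowr a p * epowr b p"
proof (cases "p = 0")
  case True then show ?thesis by simp
next
  case False
  then have p: "p > 0" using assms by auto
  show ?thesis
  proof (cases "a = \<infinity> \<or> b = \<infinity>")
    case True
    have pos: "c \<noteq> 0 \<Longrightarrow> epowr c p \<noteq> 0" for c
      using p by (cases "c = \<infinity>") (auto simp: epowr_def enn2real_eq_0_iff)
    have z: "epowr 0 p = 0" using p by (simp add: epowr_def)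
    from True show ?thesis
    proof
      assume a: "a = \<infinity>"
      show ?thesis
      proof (cases "b = 0")
        case True then show ?thesis using a z by simp
      next
        case False then show ?thesis using a p pos[of b] by (simp add: ennreal_top_mult epowr_def)
      qed
    next
      assume a: "b = \<infinity>"
      show ?thesis
      proof (cases "a = 0")
        case True then show ?thesis using a z by simp
      next
        case False then show ?thesis using a p pos[of a] by (simp add: ennreal_mult_top epowr_def)
      qed
    qed
  next
    case False
    then show ?thesis using p
      by (auto simp: epowr_def enn2real_mult powr_mult ennreal_mult ennreal_mult_eq_top_iff)
  qed
qed

lemma epowr_add:
  assumes "a \<noteq> \<infinity>" "p \<ge> 0" "q \<ge> 0"
  shows "epowr a p * epowr a q = epowr a (p + q)"
proof (cases "p = 0 \<or> q = 0")
  case True then show ?thesis by auto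
next
  case False
  then have "p + q \<noteq> 0" using assms by linarith
  have "ennreal (enn2real a powr p) * ennreal (enn2real a powr q) = ennreal (enn2real a powr p * enn2real a powr q)"
    by (rule ennreal_mult''[symmetric]) simp
  also have "\<dots> = ennreal (enn2real a powr (p + q))" by (simp add: powr_add)
  finally show ?thesis using False assms \<open>p + q \<noteq> 0\<close> by (simp add: epowr_fin)
qed

lemma epowr_less_top: "a < \<infinity> \<Longrightarrow> epowr a p < \<infinity>"
  using epowr_finite[of a p] by (simp add: top.not_eq_extremum)


lemma tangent_ineq:
  fixes r x t :: real
  assumes r: "r > 1" and x: "x \<ge> 0" and t: "t \<ge> 0"
  shows "r * t powr (r - 1) * x \<le> x powr r + (r - 1) * t powr r"
proof -
  define q where "q = r / (r - 1)"
  have q: "q > 1" using r by (simp add: q_def)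
  have pq: "1/r + 1/q = 1" using r by (simp add: q_def field_simps)
  have "x * t powr (r - 1) \<le> x powr r / r + (t powr (r - 1)) powr q / q"
    using Youngs_inequality[OF r q pq x] t by simp
  also have "(t powr (r - 1)) powr q = t powr r"
    using r t by (simp add: powr_powr q_def)
  finally have "x * t powr (r - 1) \<le> x powr r / r + t powr r / q" .
  then have "r * (x * t powr (r - 1)) \<le> r * (x powr r / r + t powr r / q)"
    using r by (intro mult_left_mono) auto
  also have "\<dots> = x powr r + (r - 1) * t powr r"
    using r by (simp add: q_def field_simps)
  finally show ?thesis by (simp add: mult.commute mult.left_commute)
qed

lemma le_one_plus_epowr:
  assumes r: "r \<ge> 1"
  shows "c \<le> 1 + epowr c r"
proof (cases "c = \<infinity>")
  case True then show ?thesis using r by (simp add: epowr_def)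
next
  case False
  then obtain x where x: "c = ennreal x" "x \<ge> 0" by (cases c) auto
  have "x \<le> 1 + x powr r"
  proof (cases "x \<le> 1")
    case True then show ?thesis by (smt (verit) powr_ge_zero)
  next
    case False
    then have "x powr 1 \<le> x powr r" using r by (intro powr_mono) auto
    then show ?thesis using False by simp
  qed
  then have "ennreal x \<le> ennreal (1 + x powr r)" by (rule ennreal_leI)
  also have "ennreal (1 + x powr r) = 1 + ennreal (x powr r)"
    by (metis ennreal_1 ennreal_plus powr_ge_zero zero_le_one)
  finally show ?thesis using x r by (simp add: epowr_def)
qed

lemma holder_count:
  fixes a c :: "'i \<Rightarrow> ennreal"
  assumes r: "r \<ge> 1" and M: "M \<noteq> \<infinity>" and A: "(\<integral>\<^sup>+i. a i \<partial>count_space I) \<le> M"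
  shows "epowr (\<integral>\<^sup>+i. c i * a i \<partial>count_space I) r
           \<le> epowr M (r - 1) * (\<integral>\<^sup>+i. epowr (c i) r * a i \<partial>count_space I)"
proof (cases "r = 1")
  case True then show ?thesis by simp
next
  case False
  then have r1: "r > 1" using r by simp
  define AA where "AA = (\<integral>\<^sup>+i. a i \<partial>count_space I)"
  define T where "T = (\<integral>\<^sup>+i. c i * a i \<partial>count_space I)"
  define S where "S = (\<integral>\<^sup>+i. epowr (c i) r * a i \<partial>count_space I)"
  have AAfin: "AA \<noteq> \<infinity>" using A M unfolding AA_def by (metis infinity_ennreal_def neq_top_trans)
  show ?thesis
  proof (cases "AA = 0")
    case True
    then have "\<forall>i\<in>I. a i = 0"
      unfolding AA_def by (simp add: nn_integral_0_iff_AE AE_count_space)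
    then have "T = 0" unfolding T_def by (simp add: nn_integral_0_iff_AE AE_count_space)
    then show ?thesis using r1 by (simp add: T_def[symmetric] epowr_zero_base)
  next
    case False
    then have AApos: "AA > 0" by (simp add: zero_less_iff_neq_zero)
    have Mpos: "M > 0" using AApos A unfolding AA_def by (meson order_less_le_trans)
    have epM: "epowr M (r - 1) > 0"
    proof -
      have "enn2real M > 0" using Mpos M by (simp add: enn2real_positive_iff top.not_eq_extremum)
      then show ?thesis using M r1 by (simp add: epowr_fin)
    qed
    have TS: "T \<le> AA + S"
    proof -
      have "T \<le> (\<integral>\<^sup>+i. a i + epowr (c i) r * a i \<partial>count_space I)"
        unfolding T_def
      proof (rule nn_integral_mono)
        fix i
        have "c i * a i \<le> (1 + epowr (c i) r) * a i"
          by (intro mult_right_mono le_one_plus_epowr r) simp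
        then show "c i * a i \<le> a i + epowr (c i) r * a i" by (simp add: distrib_right)
      qed
      also have "\<dots> = AA + S" unfolding AA_def S_def by (rule nn_integral_add) auto
      finally show ?thesis .
    qed
    show ?thesis
    proof (cases "S = \<infinity>")
      case True
      then show ?thesis using epM by (simp add: S_def[symmetric] T_def[symmetric] ennreal_mult_top)
    next
      case False
      have "AA + S \<noteq> \<infinity>" using AAfin False by simp
      then have Tfin: "T \<noteq> \<infinity>" using TS
        by (metis infinity_ennreal_def top_unique)
      define Ar where "Ar = enn2real AA"
      define Tr where "Tr = enn2real T"
      define Sr where "Sr = enn2real S"
      define t where "t = Tr / Ar"
      have Ar: "Ar > 0" "AA = ennreal Ar" using AApos AAfin unfolding Ar_def
        by (auto simp: enn2real_positive_iff top.not_eq_extremum)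
      have Tr: "Tr \<ge> 0" "T = ennreal Tr" using Tfin unfolding Tr_def by (auto simp: less_top)
      have Sr: "Sr \<ge> 0" "S = ennreal Sr" using False unfolding Sr_def by (auto simp: less_top)
      have t: "t \<ge> 0" "Tr = t * Ar" using Ar Tr unfolding t_def by auto
      have pw: "ennreal (r * t powr (r - 1)) * c i \<le> epowr (c i) r + ennreal ((r - 1) * t powr r)" for i
      proof (cases "c i = \<infinity>")
        case True then show ?thesis using r1 by (simp add: epowr_def)
      next
        case False
        then obtain x where x: "c i = ennreal x" "x \<ge> 0" by (cases "c i") auto
        have "ennreal (r * t powr (r - 1)) * ennreal x = ennreal (r * t powr (r - 1) * x)"
          using r1 x by (simp add: ennreal_mult'')
        also have "\<dots> \<le> ennreal (x powr r + (r - 1) * t powr r)"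
          by (rule ennreal_leI, rule tangent_ineq[OF r1 x(2) t(1)])
        also have "\<dots> = ennreal (x powr r) + ennreal ((r - 1) * t powr r)"
          using r1 by (intro ennreal_plus) auto
        finally show ?thesis using x r1 by (simp add: epowr_def)
      qed
      have "ennreal (r * t powr (r - 1)) * T = (\<integral>\<^sup>+i. ennreal (r * t powr (r - 1)) * c i * a i \<partial>count_space I)"
        unfolding T_def by (subst nn_integral_cmult[symmetric]) (auto simp: mult.assoc)
      also have "\<dots> \<le> (\<integral>\<^sup>+i. epowr (c i) r * a i + ennreal ((r - 1) * t powr r) * a i \<partial>count_space I)"
        by (intro nn_integral_mono) (metis distrib_right mult_right_mono pw zero_le)
      also have "\<dots> = S + ennreal ((r - 1) * t powr r) * AA"
        unfolding S_def AA_def by (subst nn_integral_add) (auto simp: nn_integral_cmult)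
      finally have "ennreal (r * t powr (r - 1)) * ennreal (t * Ar) \<le> ennreal Sr + ennreal ((r - 1) * t powr r) * ennreal Ar"
        using Tr t Sr Ar by simp
      moreover have "ennreal (r * t powr (r - 1)) * ennreal (t * Ar) = ennreal (r * t powr (r - 1) * (t * Ar))"
        by (rule ennreal_mult''[symmetric]) (use r1 t(1) Ar(1) in simp)
      moreover have "ennreal Sr + ennreal ((r - 1) * t powr r) * ennreal Ar = ennreal (Sr + (r - 1) * t powr r * Ar)"
        using r1 Sr Ar by (subst ennreal_plus) (auto simp: ennreal_mult'')
      ultimately have "ennreal (r * t powr (r - 1) * (t * Ar)) \<le> ennreal (Sr + (r - 1) * t powr r * Ar)"
        by simp
      then have "r * t powr (r - 1) * (t * Ar) \<le> Sr + (r - 1) * t powr r * Ar"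
        using r1 t Ar Sr by (subst (asm) ennreal_le_iff) auto
      moreover have "t powr (r - 1) * t = t powr r"
        using t r1 by (cases "t = 0") (auto simp: powr_diff)
      ultimately have key: "r * (t powr r * Ar) \<le> Sr + (r - 1) * (t powr r * Ar)"
        by (simp add: algebra_simps)
      then have key2: "t powr r * Ar \<le> Sr" by (simp add: algebra_simps)
      have "epowr T r = ennreal ((t * Ar) powr r)"
        using Tr t r1 by (simp add: epowr_def)
      also have "(t * Ar) powr r = Ar powr (r - 1) * (t powr r * Ar)"
        using t Ar r1 by (simp add: powr_mult powr_diff field_simps)
      also have "\<dots> \<le> enn2real M powr (r - 1) * Sr"
      proof (rule mult_mono)
        have "Ar \<le> enn2real M" using A M unfolding Ar_def AA_def[symmetric]
          by (simp add: enn2real_mono less_top)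
        then show "Ar powr (r - 1) \<le> enn2real M powr (r - 1)"
          using Ar r1 by (intro powr_mono2) auto
      qed (use key2 Sr Ar(1) in auto)
      finally have "epowr T r \<le> ennreal (enn2real M powr (r - 1) * Sr)" by (simp add: ennreal_leI)
      also have "\<dots> = epowr M (r - 1) * S"
        using M r1 Sr by (simp add: epowr_def ennreal_mult'')
      finally show ?thesis unfolding T_def S_def .
    qed
  qed
qed



abbreviation sp :: "nat \<Rightarrow> (nat \<Rightarrow> real) measure" where
  "sp n \<equiv> PiM {..<n} (\<lambda>_. lborel)"

definition aff :: "nat \<Rightarrow> real \<Rightarrow> (nat \<Rightarrow> real) \<Rightarrow> (nat \<Rightarrow> real) \<Rightarrow> (nat \<Rightarrow> real)" where
  "aff n c v x = restrict (\<lambda>i. c * x i - v i) {..<n}"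

fun kap :: "((nat \<Rightarrow> real) \<Rightarrow> ennreal) \<Rightarrow> nat \<Rightarrow> (nat \<Rightarrow> real) \<Rightarrow> ennreal" where
  "kap g 0 u = g u"
| "kap g (Suc j) u = (\<integral>\<^sup>+ s. kap g j (u(j := s)) \<partial>lborel)"

interpretation lbp: product_sigma_finite "\<lambda>_::nat. lborel :: real measure"
  by (simp add: product_sigma_finite_def lborel.sigma_finite_measure_axioms)

lemma space_sp: "space (sp n) = PiE {..<n} (\<lambda>_. UNIV)"
  by (simp add: space_PiM)

lemma Rn_sp: "Rn n = space (sp n)"
  by (simp add: space_sp Rn_def)

lemma upd_in_space: "u \<in> space (sp n) \<Longrightarrow> j < n \<Longrightarrow> u(j := s) \<in> space (sp n)"
  by (auto simp: space_sp PiE_def extensional_def)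

lemma upd_meas2:
  assumes "j < n"
  shows "(\<lambda>p. (fst p)(j := snd p)) \<in> sp n \<Otimes>\<^sub>M lborel \<rightarrow>\<^sub>M sp n"
proof -
  have "(\<lambda>p i. ((fst p)(j := snd p)) i) \<in> sp n \<Otimes>\<^sub>M lborel \<rightarrow>\<^sub>M sp n"
  proof (rule measurable_PiM_single')
    fix i assume i: "i \<in> {..<n}"
    show "(\<lambda>p. ((fst p)(j := snd p)) i) \<in> sp n \<Otimes>\<^sub>M lborel \<rightarrow>\<^sub>M lborel"
    proof (cases "i = j")
      case True then show ?thesis by simp
    next
      case False
      then have eq: "(\<lambda>p. ((fst p)(j := snd p)) i) = (\<lambda>p. fst p i)" by auto
      have "(\<lambda>p. fst p i) \<in> sp n \<Otimes>\<^sub>M lborel \<rightarrow>\<^sub>M lborel"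
        using i by measurable
      then show ?thesis unfolding eq .
    qed
  next
    show "(\<lambda>p i. ((fst p)(j := snd p)) i) \<in> space (sp n \<Otimes>\<^sub>M lborel) \<rightarrow> (\<Pi>\<^sub>E i\<in>{..<n}. space lborel)"
      using assms by (auto simp: space_pair_measure space_sp PiE_def extensional_def)
  qed
  then show ?thesis by (simp add: fun_upd_def)
qed

lemma upd_meas1:
  assumes "j < n" "u \<in> space (sp n)"
  shows "(\<lambda>s. u(j := s)) \<in> lborel \<rightarrow>\<^sub>M sp n"
proof -
  have "(\<lambda>s. (fst (u, s))(j := snd (u, s))) \<in> lborel \<rightarrow>\<^sub>M sp n"
    using measurable_Pair2[OF upd_meas2[OF assms(1)] assms(2)] by simp
  then show ?thesis by simp
qed

lemma kap_meas:
  assumes g: "g \<in> borel_measurable (sp n)"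
  shows "j \<le> n \<Longrightarrow> kap g j \<in> borel_measurable (sp n)"
proof (induction j)
  case 0 then show ?case using g by simp
next
  case (Suc j)
  then have j: "j < n" by simp
  have "(\<lambda>p. kap g j ((fst p)(j := snd p))) \<in> borel_measurable (sp n \<Otimes>\<^sub>M lborel)"
    using measurable_comp[OF upd_meas2[OF j] Suc.IH[OF less_imp_le[OF j]]] by (simp add: comp_def)
  then have "case_prod (\<lambda>u s. kap g j (u(j := s))) \<in> borel_measurable (sp n \<Otimes>\<^sub>M lborel)"
    by (simp add: case_prod_beta')
  then have "(\<lambda>u. \<integral>\<^sup>+ s. kap g j (u(j := s)) \<partial>lborel) \<in> borel_measurable (sp n)"
    by (rule lborel.borel_measurable_nn_integral)
  then show ?case by simp
qed

lemma kap_upd: "i < j \<Longrightarrow> kap g j (u(i := s)) = kap g j u"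
proof (induction j arbitrary: u)
  case 0 then show ?case by simp
next
  case (Suc j)
  show ?case
  proof (cases "i = j")
    case True
    have e: "u(i := s, j := t) = u(j := t)" for t using True by simp
    show ?thesis by (simp only: kap.simps e)
  next
    case False
    then have ij: "i < j" using Suc.prems by simp
    have e: "u(i := s, j := t) = u(j := t, i := s)" for t using False by (rule fun_upd_twist)
    have e2: "kap g j (u(j := t, i := s)) = kap g j (u(j := t))" for t
      by (rule Suc.IH[OF ij])
    show ?thesis by (simp only: kap.simps e e2)
  qed
qed

lemma aff_space[simp]: "aff n c v x \<in> space (sp n)"
  by (simp add: aff_def space_sp)

lemma aff_meas: "aff n c v \<in> sp n \<rightarrow>\<^sub>M sp n"
  unfolding aff_def by measurable

lemma aff_upd: "j < n \<Longrightarrow> aff n c v (x(j := t)) = (aff n c v x)(j := c * t - v j)"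
  by (auto simp: aff_def fun_eq_iff)

lemma kap_aff:
  assumes g: "g \<in> borel_measurable (sp n)" and c: "c > 0"
  shows "j \<le> n \<Longrightarrow> kap (\<lambda>y. g (aff n c v y)) j x = ennreal ((1/c)^j) * kap g j (aff n c v x)"
proof (induction j arbitrary: x)
  case 0 then show ?case by simp
next
  case (Suc j)
  then have j: "j < n" by simp
  define F where "F = (\<lambda>s. kap g j ((aff n c v x)(j := s)))"
  have Fm: "F \<in> borel_measurable lborel"
    unfolding F_def
    using measurable_comp[OF upd_meas1[OF j aff_space] kap_meas[OF g less_imp_le[OF j]]]
    by (simp add: comp_def)
  have eqs: "kap (\<lambda>y. g (aff n c v y)) j (x(j := s)) = ennreal ((1/c)^j) * F (- v j + c * s)" for s
  proof -
    have "kap (\<lambda>y. g (aff n c v y)) j (x(j := s)) = ennreal ((1/c)^j) * kap g j (aff n c v (x(j := s)))"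
      by (rule Suc.IH[OF less_imp_le[OF j]])
    also have "aff n c v (x(j := s)) = (aff n c v x)(j := - v j + c * s)"
      by (subst aff_upd[OF j]) simp
    finally show ?thesis unfolding F_def .
  qed
  have "kap (\<lambda>y. g (aff n c v y)) (Suc j) x
      = (\<integral>\<^sup>+ s. ennreal ((1/c)^j) * F (- v j + c * s) \<partial>lborel)"
    by (simp only: kap.simps eqs)
  also have "\<dots> = ennreal ((1/c)^j) * (\<integral>\<^sup>+ s. F (- v j + c * s) \<partial>lborel)"
    using Fm by (subst nn_integral_cmult) auto
  also have "(\<integral>\<^sup>+ s. F (- v j + c * s) \<partial>lborel) = ennreal (1/c) * (\<integral>\<^sup>+ s. F s \<partial>lborel)"
  proof -
    have "(\<integral>\<^sup>+ s. F s \<partial>lborel) = ennreal c * (\<integral>\<^sup>+ s. F (- v j + c * s) \<partial>lborel)"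
      using nn_integral_real_affine[OF _ , of F c "- v j"] Fm c by simp
    then have "ennreal (1/c) * (\<integral>\<^sup>+ s. F s \<partial>lborel) = ennreal (1/c) * ennreal c * (\<integral>\<^sup>+ s. F (- v j + c * s) \<partial>lborel)"
      by (simp add: mult.assoc)
    also have "ennreal (1/c) * ennreal c = 1"
      using c by (simp add: ennreal_mult''[symmetric])
    finally show ?thesis by simp
  qed
  also have "ennreal ((1/c)^j) * (ennreal (1/c) * (\<integral>\<^sup>+ s. F s \<partial>lborel)) = ennreal ((1/c)^Suc j) * (\<integral>\<^sup>+ s. F s \<partial>lborel)"
  proof -
    have "ennreal ((1/c)^Suc j) = ennreal ((1/c)^j) * ennreal (1/c)"
      using c by (simp add: ennreal_mult''[symmetric] power_Suc2 del: power_Suc)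
    then show ?thesis by (simp add: mult.assoc)
  qed
  finally show ?case by (simp add: F_def)
qed


definition mg :: "nat \<Rightarrow> (nat \<Rightarrow> real) \<Rightarrow> (nat \<Rightarrow> real) \<Rightarrow> (nat \<Rightarrow> real)" where
  "mg j x u = (\<lambda>i. if i < j then x i else u i)"

lemma mg_meas:
  assumes "j \<le> n" "u \<in> space (sp n)"
  shows "(\<lambda>x. mg j x u) \<in> PiM {..<j} (\<lambda>_. lborel) \<rightarrow>\<^sub>M sp n"
proof -
  have "(\<lambda>x i. (\<lambda>i x. if i < j then x i else u i) i x) \<in> PiM {..<j} (\<lambda>_. lborel) \<rightarrow>\<^sub>M sp n"
  proof (rule measurable_PiM_single')
    fix i assume "i \<in> {..<n}"
    show "(\<lambda>x. if i < j then x i else u i) \<in> PiM {..<j} (\<lambda>_. lborel) \<rightarrow>\<^sub>M lborel"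
      by (cases "i < j") auto
  next
    show "(\<lambda>x i. if i < j then x i else u i) \<in> space (PiM {..<j} (\<lambda>_. lborel)) \<rightarrow> (\<Pi>\<^sub>E i\<in>{..<n}. space lborel)"
      using assms by (auto simp: space_sp PiE_def extensional_def)
  qed
  then show ?thesis by (simp add: mg_def)
qed

lemma kap_PiM:
  assumes g: "g \<in> borel_measurable (sp n)"
  shows "j \<le> n \<Longrightarrow> u \<in> space (sp n) \<Longrightarrow> kap g j u = (\<integral>\<^sup>+ x. g (mg j x u) \<partial>PiM {..<j} (\<lambda>_. lborel))"
proof (induction j arbitrary: u)
  case 0
  have "mg 0 x u = u" for x by (simp add: mg_def)
  then show ?case by (simp add: PiM_empty nn_integral_count_space_finite)
next
  case (Suc j)
  then have j: "j < n" by simp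
  have fm: "(\<lambda>x. g (mg (Suc j) x u)) \<in> borel_measurable (PiM (insert j {..<j}) (\<lambda>_. lborel))"
    using measurable_comp[OF mg_meas[OF Suc.prems] g] lessThan_Suc[of j] by (simp add: comp_def)
  have "(\<integral>\<^sup>+ x. g (mg (Suc j) x u) \<partial>PiM {..<Suc j} (\<lambda>_. lborel))
      = (\<integral>\<^sup>+ x. g (mg (Suc j) x u) \<partial>PiM (insert j {..<j}) (\<lambda>_. lborel))"
    by (simp add: lessThan_Suc)
  also have "\<dots> = (\<integral>\<^sup>+ y. (\<integral>\<^sup>+ x. g (mg (Suc j) (x(j := y)) u) \<partial>PiM {..<j} (\<lambda>_. lborel)) \<partial>lborel)"
    by (rule lbp.product_nn_integral_insert_rev[OF _ _ fm]) auto
  also have "\<dots> = (\<integral>\<^sup>+ y. kap g j (u(j := y)) \<partial>lborel)"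
  proof (rule nn_integral_cong)
    fix y
    have e: "mg (Suc j) (x(j := y)) u = mg j x (u(j := y))" for x
      by (auto simp: mg_def fun_eq_iff)
    have IH: "kap g j (u(j := y)) = (\<integral>\<^sup>+ x. g (mg j x (u(j := y))) \<partial>PiM {..<j} (\<lambda>_. lborel))"
      by (rule Suc.IH[OF less_imp_le[OF j] upd_in_space[OF Suc.prems(2) j]])
    show "(\<integral>\<^sup>+ x. g (mg (Suc j) (x(j := y)) u) \<partial>PiM {..<j} (\<lambda>_. lborel)) = kap g j (u(j := y))"
      unfolding e IH ..
  qed
  finally show ?case by simp
qed

lemma kap_full:
  assumes g: "g \<in> borel_measurable (sp n)" and u: "u \<in> space (sp n)"
  shows "kap g n u = (\<integral>\<^sup>+ x. g x \<partial>sp n)"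
proof -
  have "kap g n u = (\<integral>\<^sup>+ x. g (mg n x u) \<partial>sp n)" by (rule kap_PiM[OF g order_refl u])
  also have "\<dots> = (\<integral>\<^sup>+ x. g x \<partial>sp n)"
  proof (rule nn_integral_cong)
    fix x assume x: "x \<in> space (sp n)"
    have "mg n x u = x" using x u by (auto simp: mg_def fun_eq_iff space_sp PiE_def extensional_def)
    then show "g (mg n x u) = g x" by simp
  qed
  finally show ?thesis .
qed

definition u0 :: "nat \<Rightarrow> nat \<Rightarrow> real" where "u0 n = restrict (\<lambda>_. 0) {..<n}"

lemma u0_space[simp]: "u0 n \<in> space (sp n)" by (simp add: u0_def space_sp)

lemma nn_integral_aff:
  assumes g: "g \<in> borel_measurable (sp n)" and c: "c > 0"
  shows "(\<integral>\<^sup>+ x. g (aff n c v x) \<partial>sp n) = ennreal ((1/c)^n) * (\<integral>\<^sup>+ x. g x \<partial>sp n)"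
proof -
  have gm: "(\<lambda>y. g (aff n c v y)) \<in> borel_measurable (sp n)"
    using measurable_comp[OF aff_meas g] by (simp add: comp_def)
  have "(\<integral>\<^sup>+ x. g (aff n c v x) \<partial>sp n) = kap (\<lambda>y. g (aff n c v y)) n (u0 n)"
    by (rule kap_full[OF gm u0_space, symmetric])
  also have "\<dots> = ennreal ((1/c)^n) * kap g n (aff n c v (u0 n))"
    by (rule kap_aff[OF g c order_refl])
  also have "\<dots> = ennreal ((1/c)^n) * (\<integral>\<^sup>+ x. g x \<partial>sp n)"
    by (simp add: kap_full[OF g aff_space])
  finally show ?thesis .
qed

lemma aff_null:
  assumes N: "N \<in> null_sets (sp n)" and c: "c > 0"
  shows "{x \<in> space (sp n). aff n c v x \<in> N} \<in> null_sets (sp n)"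
proof -
  have Ns: "N \<in> sets (sp n)" using N by auto
  have S: "{x \<in> space (sp n). aff n c v x \<in> N} \<in> sets (sp n)"
    using measurable_sets[OF aff_meas Ns] by (simp add: vimage_def Int_def conj_commute)
  have "emeasure (sp n) {x \<in> space (sp n). aff n c v x \<in> N}
      = (\<integral>\<^sup>+ x. indicator {x \<in> space (sp n). aff n c v x \<in> N} x \<partial>sp n)"
    using S by simp
  also have "\<dots> = (\<integral>\<^sup>+ x. indicator N (aff n c v x) \<partial>sp n)"
    by (rule nn_integral_cong) (auto simp: indicator_def)
  also have "\<dots> = ennreal ((1/c)^n) * (\<integral>\<^sup>+ x. indicator N x \<partial>sp n)"
    using Ns by (intro nn_integral_aff c) auto
  also have "\<dots> = 0" using N by (simp add: nn_integral_indicator null_setsD1 null_setsD2 del: nn_integral_indicator_singleton)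
  finally show ?thesis using S by (simp add: null_sets_def)
qed

fun nrm :: "(nat \<Rightarrow> real) \<Rightarrow> ((nat \<Rightarrow> real) \<Rightarrow> ennreal) \<Rightarrow> nat \<Rightarrow> (nat \<Rightarrow> real) \<Rightarrow> ennreal" where
  "nrm P g 0 x = g x"
| "nrm P g (Suc j) x = epowr (\<integral>\<^sup>+ t. epowr (nrm P g j (x(j := t))) (P j) \<partial>lborel) (1 / P j)"

lemma mixnorm_aux_nrm: "mixnorm_aux n P f j x = nrm P (\<lambda>y. ennreal \<bar>f y\<bar>) j x"
  by (induction j arbitrary: x) auto

lemma nrm_mono:
  assumes "\<And>y. g y \<le> h y" "\<And>i. i < j \<Longrightarrow> P i > 0"
  shows "nrm P g j x \<le> nrm P h j x"
  using assms(2)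
proof (induction j arbitrary: x)
  case 0 then show ?case using assms(1) by simp
next
  case (Suc j)
  have Pj: "P j > 0" using Suc.prems by simp
  have IH: "nrm P g j y \<le> nrm P h j y" for y using Suc.IH Suc.prems by simp
  have "(\<integral>\<^sup>+ t. epowr (nrm P g j (x(j := t))) (P j) \<partial>lborel) \<le> (\<integral>\<^sup>+ t. epowr (nrm P h j (x(j := t))) (P j) \<partial>lborel)"
    by (intro nn_integral_mono epowr_mono IH) (use Pj in simp)
  then show ?case using Pj by (simp add: epowr_mono)
qed

lemma ae_mono:
  assumes B: "B \<in> sets (sp n)" and gh: "\<And>y. y \<in> space (sp n) \<Longrightarrow> y \<notin> B \<Longrightarrow> g y \<le> h y"
    and Ppos: "\<And>i. i < n \<Longrightarrow> P i > 0"
  shows "j \<le> n \<Longrightarrow> x \<in> space (sp n) \<Longrightarrow> kap (indicator B) j x = 0 \<Longrightarrow> nrm P g j x \<le> nrm P h j x"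
proof (induction j arbitrary: x)
  case 0 then show ?case using gh by (simp add: indicator_def split: if_splits)
next
  case (Suc j)
  then have j: "j < n" by simp
  have Pj: "P j > 0" using Ppos j by simp
  have im: "(indicator B :: _ \<Rightarrow> ennreal) \<in> borel_measurable (sp n)" using B by simp
  have fm: "(\<lambda>t. kap (indicator B) j (x(j := t))) \<in> borel_measurable lborel"
    using measurable_comp[OF upd_meas1[OF j Suc.prems(2)] kap_meas[OF im less_imp_le[OF j]]]
    by (simp add: comp_def)
  have "(\<integral>\<^sup>+ t. kap (indicator B) j (x(j := t)) \<partial>lborel) = 0" using Suc.prems(3) by simp
  then have ae: "AE t in lborel. kap (indicator B) j (x(j := t)) = 0"
    using fm by (simp add: nn_integral_0_iff_AE)
  have "AE t in lborel. epowr (nrm P g j (x(j := t))) (P j) \<le> epowr (nrm P h j (x(j := t))) (P j)"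
    using ae
  proof eventually_elim
    case (elim t)
    show ?case
      by (rule epowr_mono[OF Suc.IH[OF less_imp_le[OF j] upd_in_space[OF Suc.prems(2) j] elim]]) (use Pj in simp)
  qed
  then have "(\<integral>\<^sup>+ t. epowr (nrm P g j (x(j := t))) (P j) \<partial>lborel) \<le> (\<integral>\<^sup>+ t. epowr (nrm P h j (x(j := t))) (P j) \<partial>lborel)"
    by (rule nn_integral_mono_AE)
  then show ?case using Pj by (simp add: epowr_mono)
qed

lemma ae_mono_full:
  assumes B: "B \<in> null_sets (sp n)" and gh: "\<And>y. y \<in> space (sp n) \<Longrightarrow> y \<notin> B \<Longrightarrow> g y \<le> h y"
    and Ppos: "\<And>i. i < n \<Longrightarrow> P i > 0" and x: "x \<in> space (sp n)"
  shows "nrm P g n x \<le> nrm P h n x"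
proof (rule ae_mono[OF _ gh Ppos order_refl x])
  show "B \<in> sets (sp n)" using B by auto
  have im: "(indicator B :: _ \<Rightarrow> ennreal) \<in> borel_measurable (sp n)" using B by auto
  show "kap (indicator B) n x = 0"
    using B by (simp add: kap_full[OF im x] nn_integral_indicator null_setsD1 null_setsD2 del: nn_integral_indicator_singleton)
qed auto



definition Zs :: "nat \<Rightarrow> nat \<Rightarrow> (nat \<Rightarrow> int) set" where
  "Zs n j = {k \<in> Zn n. \<forall>i<j. k i = 0}"

definition ivec :: "(nat \<Rightarrow> int) \<Rightarrow> nat \<Rightarrow> real" where
  "ivec k = (\<lambda>i. real_of_int (k i))"

lemma countable_Zn: "countable (Zn n)"
  unfolding Zn_def by (rule countable_PiE) auto

lemma countable_Zs: "countable (Zs n j)"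
  by (rule countable_subset[OF _ countable_Zn]) (auto simp: Zs_def)

lemma Zs_0: "Zs n 0 = Zn n" by (simp add: Zs_def)

lemma meas_count_sum:
  assumes I: "countable I" and F: "\<And>i. i \<in> I \<Longrightarrow> F i \<in> borel_measurable M"
  shows "(\<lambda>x. \<integral>\<^sup>+ i. F i x \<partial>count_space I) \<in> borel_measurable M"
proof -
  interpret C: sigma_finite_measure "count_space I"
    by (rule sigma_finite_measure_count_space_countable[OF I])
  have "(\<lambda>p. F (snd p) (fst p)) \<in> borel_measurable (M \<Otimes>\<^sub>M count_space I)"
  proof (rule measurable_compose_countable'[where I = I])
    fix i assume "i \<in> I"
    then show "(\<lambda>p. F i (fst p)) \<in> borel_measurable (M \<Otimes>\<^sub>M count_space I)"
      using F by measurable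
  qed (use I in auto)
  then have "case_prod (\<lambda>x i. F i x) \<in> borel_measurable (M \<Otimes>\<^sub>M count_space I)"
    by (simp add: case_prod_beta')
  then show ?thesis by (rule C.borel_measurable_nn_integral)
qed

lemma regroup:
  fixes F :: "(nat \<Rightarrow> int) \<Rightarrow> ennreal"
  assumes j: "j < n"
  shows "(\<integral>\<^sup>+ k. (\<integral>\<^sup>+ m. F (k(j := m)) \<partial>count_space UNIV) \<partial>count_space (Zs n (Suc j)))
       = (\<integral>\<^sup>+ k. F k \<partial>count_space (Zs n j))"
proof -
  interpret C: sigma_finite_measure "count_space (UNIV :: int set)"
    by (rule sigma_finite_measure_count_space)
  have "(\<integral>\<^sup>+ k. (\<integral>\<^sup>+ m. F (k(j := m)) \<partial>count_space UNIV) \<partial>count_space (Zs n (Suc j)))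
      = (\<integral>\<^sup>+ p. F ((fst p)(j := snd p)) \<partial>(count_space (Zs n (Suc j)) \<Otimes>\<^sub>M count_space UNIV))"
  proof -
    have "(\<integral>\<^sup>+ k. (\<integral>\<^sup>+ m. (\<lambda>p. F ((fst p)(j := snd p))) (k, m) \<partial>count_space UNIV) \<partial>count_space (Zs n (Suc j)))
      = integral\<^sup>N (count_space (Zs n (Suc j)) \<Otimes>\<^sub>M count_space UNIV) (\<lambda>p. F ((fst p)(j := snd p)))"
      by (rule C.nn_integral_fst[of "\<lambda>p. F ((fst p)(j := snd p))"]) (simp add: pair_measure_countable countable_Zs)
    then show ?thesis by simp
  qed
  also have "\<dots> = (\<integral>\<^sup>+ p. F ((fst p)(j := snd p)) \<partial>count_space (Zs n (Suc j) \<times> UNIV))"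
    by (simp add: pair_measure_countable countable_Zs)
  also have "\<dots> = (\<integral>\<^sup>+ k. F k \<partial>count_space (Zs n j))"
  proof (rule nn_integral_bij_count_space)
    show "bij_betw (\<lambda>p. (fst p)(j := snd p)) (Zs n (Suc j) \<times> UNIV) (Zs n j)"
    proof (rule bij_betwI[where g = "\<lambda>k. (k(j := 0), k j)"])
      show "(\<lambda>p. (fst p)(j := snd p)) \<in> Zs n (Suc j) \<times> UNIV \<rightarrow> Zs n j"
        using j by (auto simp: Zs_def Zn_def PiE_def extensional_def)
      show "(\<lambda>k. (k(j := 0), k j)) \<in> Zs n j \<rightarrow> Zs n (Suc j) \<times> UNIV"
        using j by (auto simp: Zs_def Zn_def PiE_def extensional_def less_Suc_eq)
      show "(\<lambda>k. (k(j := 0), k j)) ((\<lambda>p. (fst p)(j := snd p)) p) = p"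
        if "p \<in> Zs n (Suc j) \<times> UNIV" for p
        using that by (auto simp: Zs_def fun_eq_iff prod_eq_iff)
      show "(\<lambda>p. (fst p)(j := snd p)) ((\<lambda>k. (k(j := 0), k j)) k) = k" if "k \<in> Zs n j" for k
        by auto
    qed
  qed
  finally show ?thesis .
qed

lemma unit_decomp:
  fixes h :: "real \<Rightarrow> ennreal"
  assumes h: "h \<in> borel_measurable lborel"
  shows "(\<integral>\<^sup>+ s. h s \<partial>lborel)
       = (\<integral>\<^sup>+ s. indicator {0..<1} s * (\<integral>\<^sup>+ m. h (s - real_of_int m) \<partial>count_space UNIV) \<partial>lborel)"
proof -
  have one: "(\<integral>\<^sup>+ m. indicator {0..<1} (s + real_of_int m) * h s \<partial>count_space UNIV) = h s" for s
  proof -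
    have "(\<integral>\<^sup>+ m. indicator {0..<1} (s + real_of_int m) * h s \<partial>count_space UNIV)
        = (\<Sum>m\<in>{- \<lfloor>s\<rfloor>}. indicator {0..<1} (s + real_of_int m) * h s)"
    proof (rule nn_integral_count_space')
      fix m :: int assume "m \<notin> {- \<lfloor>s\<rfloor>}"
      then have "\<not> (0 \<le> s + m \<and> s + m < 1)"
        by (metis add.commute add_uminus_conv_diff floor_unique minus_equation_iff singletonI
                  of_int_minus diff_ge_0_iff_ge diff_less_eq)
      then show "indicator {0..<1} (s + real_of_int m) * h s = 0" by (simp add: indicator_def)
    qed auto
    also have "\<dots> = h s"
      by (simp add: indicator_def) linarith
    finally show ?thesis .
  qed
  have "(\<integral>\<^sup>+ s. h s \<partial>lborel) = (\<integral>\<^sup>+ s. (\<integral>\<^sup>+ m. indicator {0..<1} (s + real_of_int m) * h s \<partial>count_space UNIV) \<partial>lborel)"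
    by (simp add: one)
  also have "\<dots> = (\<integral>\<^sup>+ m. (\<integral>\<^sup>+ s. indicator {0..<1} (s + real_of_int m) * h s \<partial>lborel) \<partial>count_space UNIV)"
    using h by (intro nn_integral_count_space_nn_integral) auto
  also have "\<dots> = (\<integral>\<^sup>+ m. (\<integral>\<^sup>+ s. indicator {0..<1} s * h (s - real_of_int m) \<partial>lborel) \<partial>count_space UNIV)"
  proof (rule nn_integral_cong)
    fix m :: int
    let ?f = "\<lambda>s. indicator {0..<1} (s + real_of_int m) * h s :: ennreal"
    have fm: "?f \<in> borel_measurable borel" using h by measurable
    have "(\<integral>\<^sup>+ s. ?f s \<partial>lborel) = ennreal \<bar>1\<bar> * (\<integral>\<^sup>+ s. ?f (- real_of_int m + 1 * s) \<partial>lborel)"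
      by (rule nn_integral_real_affine[OF fm]) simp
    then show "(\<integral>\<^sup>+ s. ?f s \<partial>lborel) = (\<integral>\<^sup>+ s. indicator {0..<1} s * h (s - real_of_int m) \<partial>lborel)"
      by simp
  qed
  also have "\<dots> = (\<integral>\<^sup>+ s. (\<integral>\<^sup>+ m. indicator {0..<1} s * h (s - real_of_int m) \<partial>count_space UNIV) \<partial>lborel)"
    using h by (intro nn_integral_count_space_nn_integral[symmetric]) auto
  also have "\<dots> = (\<integral>\<^sup>+ s. indicator {0..<1} s * (\<integral>\<^sup>+ m. h (s - real_of_int m) \<partial>count_space UNIV) \<partial>lborel)"
    by (simp add: nn_integral_cmult)
  finally show ?thesis .
qed

lemma aff_vec_upd:
  assumes "j < n"
  shows "aff n c (ivec (k(j := m))) x = (aff n c (ivec k) x)(j := c * x j - real_of_int m)"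
  using assms by (auto simp: aff_def ivec_def fun_eq_iff)

lemma aff_comp: "aff n c v x = aff n 1 v (aff n c (\<lambda>_. 0) x)"
  by (auto simp: aff_def fun_eq_iff)

lemma int_aff_step:
  assumes j: "j < n" and G: "G \<in> borel_measurable (sp n)" and c: "c > 0"
  shows "(\<integral>\<^sup>+ t. G (aff n c v (x(j := t))) \<partial>lborel)
       = ennreal (1/c) * (\<integral>\<^sup>+ s. G ((aff n c v x)(j := s)) \<partial>lborel)"
proof -
  define F where "F = (\<lambda>s. G ((aff n c v x)(j := s)))"
  have Fm: "F \<in> borel_measurable lborel"
    unfolding F_def
    using measurable_comp[OF upd_meas1[OF j aff_space] G] by (simp add: comp_def)
  have e: "G (aff n c v (x(j := t))) = F (- v j + c * t)" for t
    unfolding F_def by (subst aff_upd[OF j]) simp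
  have "(\<integral>\<^sup>+ s. F s \<partial>lborel) = ennreal c * (\<integral>\<^sup>+ s. F (- v j + c * s) \<partial>lborel)"
    using nn_integral_real_affine[of F c "- v j"] Fm c by simp
  then have "ennreal (1/c) * (\<integral>\<^sup>+ s. F s \<partial>lborel) = (ennreal (1/c) * ennreal c) * (\<integral>\<^sup>+ s. F (- v j + c * s) \<partial>lborel)"
    by (simp add: mult.assoc)
  also have "ennreal (1/c) * ennreal c = 1"
    using c by (simp add: ennreal_mult''[symmetric])
  finally show ?thesis by (simp add: e F_def)
qed



lemma kap_aff_meas:
  assumes g0: "g0 \<in> borel_measurable (sp n)" and j: "j \<le> n" and i: "i < n" and u: "u \<in> space (sp n)"
  shows "(\<lambda>s. kap g0 j (aff n c v (u(i := s)))) \<in> borel_measurable lborel"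
  using measurable_comp[OF measurable_comp[OF upd_meas1[OF i u] aff_meas] kap_meas[OF g0 j]]
  by (simp add: comp_def)

lemma period_bound:
  assumes g0: "g0 \<in> borel_measurable (sp n)"
    and W0: "\<And>u. u \<in> space (sp n) \<Longrightarrow> (\<integral>\<^sup>+ k. g0 (aff n 1 (ivec k) u) \<partial>count_space (Zn n)) \<le> M"
  shows "j \<le> n \<Longrightarrow> u \<in> space (sp n) \<Longrightarrow> (\<integral>\<^sup>+ k. kap g0 j (aff n 1 (ivec k) u) \<partial>count_space (Zs n j)) \<le> M"
proof (induction j arbitrary: u)
  case 0 then show ?case using W0 by (simp add: Zs_0)
next
  case (Suc j)
  then have j: "j < n" by simp
  note u = Suc.prems(2)
  define \<Phi> where "\<Phi> k s = indicator {0..<1} s * (\<integral>\<^sup>+ m. kap g0 j (aff n 1 (ivec (k(j := m))) (u(j := s))) \<partial>count_space UNIV)" for k s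
  have e1: "kap g0 (Suc j) (aff n 1 (ivec k) u) = (\<integral>\<^sup>+ s. \<Phi> k s \<partial>lborel)" for k
  proof -
    have hm: "(\<lambda>s. kap g0 j ((aff n 1 (ivec k) u)(j := s))) \<in> borel_measurable lborel"
      using measurable_comp[OF upd_meas1[OF j aff_space] kap_meas[OF g0 less_imp_le[OF j]]]
      by (simp add: comp_def)
    have e: "(aff n 1 (ivec k) u)(j := s - real_of_int m) = aff n 1 (ivec (k(j := m))) (u(j := s))" for s m
      using j by (auto simp: aff_def ivec_def fun_eq_iff)
    have "kap g0 (Suc j) (aff n 1 (ivec k) u) = (\<integral>\<^sup>+ s. kap g0 j ((aff n 1 (ivec k) u)(j := s)) \<partial>lborel)"
      by simp
    also have "\<dots> = (\<integral>\<^sup>+ s. indicator {0..<1} s * (\<integral>\<^sup>+ m. kap g0 j ((aff n 1 (ivec k) u)(j := s - real_of_int m)) \<partial>count_space UNIV) \<partial>lborel)"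
      by (rule unit_decomp[OF hm])
    also have "\<dots> = (\<integral>\<^sup>+ s. \<Phi> k s \<partial>lborel)"
      unfolding \<Phi>_def e ..
    finally show ?thesis .
  qed
  have \<Phi>m: "\<Phi> k \<in> borel_measurable lborel" for k
    unfolding \<Phi>_def
    by (intro borel_measurable_times_ennreal borel_measurable_indicator' meas_count_sum
              kap_aff_meas[OF g0 less_imp_le[OF j] j u]) auto
  have "(\<integral>\<^sup>+ k. kap g0 (Suc j) (aff n 1 (ivec k) u) \<partial>count_space (Zs n (Suc j)))
      = (\<integral>\<^sup>+ k. (\<integral>\<^sup>+ s. \<Phi> k s \<partial>lborel) \<partial>count_space (Zs n (Suc j)))"
    by (simp only: e1)
  also have "\<dots> = (\<integral>\<^sup>+ s. (\<integral>\<^sup>+ k. \<Phi> k s \<partial>count_space (Zs n (Suc j))) \<partial>lborel)"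
    by (rule nn_integral_count_space_nn_integral[symmetric]) (auto simp: countable_Zs \<Phi>m[simplified])
  also have "\<dots> = (\<integral>\<^sup>+ s. indicator {0..<1} s * (\<integral>\<^sup>+ k. kap g0 j (aff n 1 (ivec k) (u(j := s))) \<partial>count_space (Zs n j)) \<partial>lborel)"
  proof (rule nn_integral_cong)
    fix s
    have "(\<integral>\<^sup>+ k. \<Phi> k s \<partial>count_space (Zs n (Suc j)))
       = indicator {0..<1} s * (\<integral>\<^sup>+ k. (\<integral>\<^sup>+ m. kap g0 j (aff n 1 (ivec (k(j := m))) (u(j := s))) \<partial>count_space UNIV) \<partial>count_space (Zs n (Suc j)))"
      unfolding \<Phi>_def by (rule nn_integral_cmult) simp
    also have "(\<integral>\<^sup>+ k. (\<integral>\<^sup>+ m. kap g0 j (aff n 1 (ivec (k(j := m))) (u(j := s))) \<partial>count_space UNIV) \<partial>count_space (Zs n (Suc j)))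
      = (\<integral>\<^sup>+ k. kap g0 j (aff n 1 (ivec k) (u(j := s))) \<partial>count_space (Zs n j))"
      by (rule regroup[OF j, of "\<lambda>k. kap g0 j (aff n 1 (ivec k) (u(j := s)))"])
    finally show "(\<integral>\<^sup>+ k. \<Phi> k s \<partial>count_space (Zs n (Suc j)))
       = indicator {0..<1} s * (\<integral>\<^sup>+ k. kap g0 j (aff n 1 (ivec k) (u(j := s))) \<partial>count_space (Zs n j))" .
  qed
  also have "\<dots> \<le> (\<integral>\<^sup>+ s. indicator {0..<1::real} s * M \<partial>lborel)"
  proof (rule nn_integral_mono)
    fix s
    have "(\<integral>\<^sup>+ k. kap g0 j (aff n 1 (ivec k) (u(j := s))) \<partial>count_space (Zs n j)) \<le> M"
      using Suc.IH[OF less_imp_le[OF j] upd_in_space[OF u j]] .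
    then show "indicator {0..<1} s * (\<integral>\<^sup>+ k. kap g0 j (aff n 1 (ivec k) (u(j := s))) \<partial>count_space (Zs n j)) \<le> indicator {0..<1} s * M"
      by (rule mult_left_mono) simp
  qed
  also have "\<dots> = M" by (simp add: nn_integral_multc)
  finally show ?case .
qed



fun sq :: "(nat \<Rightarrow> real) \<Rightarrow> real \<Rightarrow> ((nat \<Rightarrow> int) \<Rightarrow> ennreal) \<Rightarrow> nat \<Rightarrow> (nat \<Rightarrow> int) \<Rightarrow> ennreal" where
  "sq P w b 0 k = b k"
| "sq P w b (Suc j) k = epowr (ennreal (1 / w) * (\<integral>\<^sup>+ m. epowr (sq P w b j (k(j := m))) (P j) \<partial>count_space UNIV)) (1 / P j)"

lemma seqnorm_aux_sq: "seqnorm_aux n P w a j k = sq P w (\<lambda>k. ennreal \<bar>a k\<bar>) j k"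
  by (induction j arbitrary: k) auto

definition qq :: "(nat \<Rightarrow> real) \<Rightarrow> nat \<Rightarrow> real" where
  "qq P j = (if j = 0 then 1 else P (j - 1))"

lemma main_ind:
  assumes g0: "g0 \<in> borel_measurable (sp n)"
    and W0: "\<And>u. u \<in> space (sp n) \<Longrightarrow> (\<integral>\<^sup>+ k. g0 (aff n 1 (ivec k) u) \<partial>count_space (Zn n)) \<le> M"
    and Mfin: "M \<noteq> \<infinity>" and w: "w > 0"
    and P0: "1 \<le> P 0" and Pmono: "\<And>i. Suc i < n \<Longrightarrow> P i \<le> P (Suc i)"
    and H: "H = (\<lambda>x. \<integral>\<^sup>+ k. b k * g0 (aff n w (ivec k) x) \<partial>count_space (Zn n))"
  shows "j \<le> n \<Longrightarrow> x \<in> space (sp n) \<Longrightarrow>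
    epowr (nrm P H j x) (qq P j) \<le> epowr M (qq P j - 1) *
      (\<integral>\<^sup>+ k. epowr (sq P w b j k) (qq P j) * kap g0 j (aff n w (ivec k) x) \<partial>count_space (Zs n j))"
proof (induction j arbitrary: x)
  case 0
  show ?case by (simp add: qq_def H Zs_0)
next
  case (Suc j)
  then have j: "j < n" by simp
  note x = Suc.prems(2)
  have P1: "i < n \<Longrightarrow> 1 \<le> P i" for i
  proof (induction i)
    case 0 then show ?case using P0 by simp
  next
    case (Suc i) then show ?case using Pmono[of i] by simp
  qed
  define q where "q = qq P j"
  define p where "p = P j"
  define r where "r = p / q"
  have q1: "q \<ge> 1" using P1 j by (auto simp: q_def qq_def)
  have pq: "q \<le> p" using P0 Pmono[of "j - 1"] j by (auto simp: q_def p_def qq_def)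
  have p1: "p \<ge> 1" using q1 pq by simp
  have r1: "r \<ge> 1" using q1 pq by (simp add: r_def)
  have qr: "q * r = p" using q1 by (simp add: r_def)
  have qqS: "qq P (Suc j) = p" by (simp add: qq_def p_def)
  define E where "E k = epowr (sq P w b j k) p" for k
  have kjm: "kap g0 j \<in> borel_measurable (sp n)" by (rule kap_meas[OF g0 less_imp_le[OF j]])
  have C2: "epowr (nrm P H j y) p \<le> epowr M (p - 1) *
      (\<integral>\<^sup>+ k. E k * kap g0 j (aff n w (ivec k) y) \<partial>count_space (Zs n j))"
    if y: "y \<in> space (sp n)" for y
  proof -
    define \<Sigma> where "\<Sigma> = (\<integral>\<^sup>+ k. epowr (sq P w b j k) q * kap g0 j (aff n w (ivec k) y) \<partial>count_space (Zs n j))"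
    have IH: "epowr (nrm P H j y) q \<le> epowr M (q - 1) * \<Sigma>"
      unfolding \<Sigma>_def q_def by (rule Suc.IH[OF less_imp_le[OF j] y])
    have wb: "(\<integral>\<^sup>+ k. kap g0 j (aff n w (ivec k) y) \<partial>count_space (Zs n j)) \<le> M"
    proof -
      have "(\<integral>\<^sup>+ k. kap g0 j (aff n w (ivec k) y) \<partial>count_space (Zs n j))
          = (\<integral>\<^sup>+ k. kap g0 j (aff n 1 (ivec k) (aff n w (\<lambda>_. 0) y)) \<partial>count_space (Zs n j))"
        by (subst aff_comp) (rule refl)
      also have "\<dots> \<le> M"
        by (rule period_bound[OF g0 W0 less_imp_le[OF j] aff_space])
      finally show ?thesis .
    qed
    have "epowr (nrm P H j y) p = epowr (epowr (nrm P H j y) q) r"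
      using q1 r1 qr by (subst epowr_epowr) auto
    also have "\<dots> \<le> epowr (epowr M (q - 1) * \<Sigma>) r"
      using IH r1 by (intro epowr_mono) auto
    also have "\<dots> = epowr (epowr M (q - 1)) r * epowr \<Sigma> r"
      using r1 by (intro epowr_mult) auto
    also have "\<dots> \<le> epowr (epowr M (q - 1)) r * (epowr M (r - 1) *
        (\<integral>\<^sup>+ k. epowr (epowr (sq P w b j k) q) r * kap g0 j (aff n w (ivec k) y) \<partial>count_space (Zs n j)))"
      unfolding \<Sigma>_def by (intro mult_left_mono holder_count[OF r1 Mfin wb]) auto
    also have "\<dots> = (epowr (epowr M (q - 1)) r * epowr M (r - 1)) *
        (\<integral>\<^sup>+ k. E k * kap g0 j (aff n w (ivec k) y) \<partial>count_space (Zs n j))"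
    proof -
      have "epowr (epowr (sq P w b j k) q) r = E k" for k
        unfolding E_def using q1 r1 qr by (subst epowr_epowr) auto
      then show ?thesis by (simp add: mult.assoc)
    qed
    also have "epowr (epowr M (q - 1)) r * epowr M (r - 1) = epowr M (p - 1)"
    proof -
      have "epowr (epowr M (q - 1)) r = epowr M ((q - 1) * r)"
        using q1 r1 by (intro epowr_epowr) auto
      moreover have "epowr M ((q - 1) * r) * epowr M (r - 1) = epowr M ((q - 1) * r + (r - 1))"
        using q1 r1 Mfin by (intro epowr_add) auto
      moreover have "(q - 1) * r + (r - 1) = p - 1" using qr by (simp add: algebra_simps)
      ultimately show ?thesis by simp
    qed
    finally show ?thesis .
  qed
  have Em: "(\<lambda>t. E k * kap g0 j (aff n w (ivec k) (x(j := t)))) \<in> borel_measurable lborel" for k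
    by (intro borel_measurable_times_ennreal kap_aff_meas[OF g0 less_imp_le[OF j] j x]) simp
  have C4: "(\<integral>\<^sup>+ t. kap g0 j (aff n w (ivec k) (x(j := t))) \<partial>lborel)
      = ennreal (1 / w) * kap g0 (Suc j) (aff n w (ivec k) x)" for k
    using int_aff_step[OF j kjm w, of "ivec k" x] by simp
  have "epowr (nrm P H (Suc j) x) p = (\<integral>\<^sup>+ t. epowr (nrm P H j (x(j := t))) p \<partial>lborel)"
    using p1 by (simp add: p_def epowr_inv1)
  also have "\<dots> \<le> (\<integral>\<^sup>+ t. epowr M (p - 1) *
      (\<integral>\<^sup>+ k. E k * kap g0 j (aff n w (ivec k) (x(j := t))) \<partial>count_space (Zs n j)) \<partial>lborel)"
    by (intro nn_integral_mono C2 upd_in_space[OF x j])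
  also have "\<dots> = epowr M (p - 1) *
      (\<integral>\<^sup>+ t. (\<integral>\<^sup>+ k. E k * kap g0 j (aff n w (ivec k) (x(j := t))) \<partial>count_space (Zs n j)) \<partial>lborel)"
    by (intro nn_integral_cmult meas_count_sum countable_Zs Em)
  also have "(\<integral>\<^sup>+ t. (\<integral>\<^sup>+ k. E k * kap g0 j (aff n w (ivec k) (x(j := t))) \<partial>count_space (Zs n j)) \<partial>lborel)
      = (\<integral>\<^sup>+ k. (\<integral>\<^sup>+ t. E k * kap g0 j (aff n w (ivec k) (x(j := t))) \<partial>lborel) \<partial>count_space (Zs n j))"
    by (rule nn_integral_count_space_nn_integral) (auto simp: countable_Zs Em[simplified])
  also have "\<dots> = (\<integral>\<^sup>+ k. E k * (ennreal (1 / w) * kap g0 (Suc j) (aff n w (ivec k) x)) \<partial>count_space (Zs n j))"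
  proof (rule nn_integral_cong)
    fix k
    have "(\<integral>\<^sup>+ t. E k * kap g0 j (aff n w (ivec k) (x(j := t))) \<partial>lborel)
        = E k * (\<integral>\<^sup>+ t. kap g0 j (aff n w (ivec k) (x(j := t))) \<partial>lborel)"
      by (rule nn_integral_cmult) (rule kap_aff_meas[OF g0 less_imp_le[OF j] j x])
    then show "(\<integral>\<^sup>+ t. E k * kap g0 j (aff n w (ivec k) (x(j := t))) \<partial>lborel)
        = E k * (ennreal (1 / w) * kap g0 (Suc j) (aff n w (ivec k) x))"
      by (simp only: C4)
  qed
  also have "\<dots> = (\<integral>\<^sup>+ k. (\<integral>\<^sup>+ m. E (k(j := m)) * (ennreal (1 / w) * kap g0 (Suc j) (aff n w (ivec (k(j := m))) x)) \<partial>count_space UNIV) \<partial>count_space (Zs n (Suc j)))"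
    by (rule regroup[OF j, symmetric])
  also have "\<dots> = (\<integral>\<^sup>+ k. epowr (sq P w b (Suc j) k) p * kap g0 (Suc j) (aff n w (ivec k) x) \<partial>count_space (Zs n (Suc j)))"
  proof (rule nn_integral_cong)
    fix k
    have e: "kap g0 (Suc j) (aff n w (ivec (k(j := m))) x) = kap g0 (Suc j) (aff n w (ivec k) x)" for m
      unfolding aff_vec_upd[OF j] by (rule kap_upd) simp
    have "(\<integral>\<^sup>+ m. E (k(j := m)) * (ennreal (1 / w) * kap g0 (Suc j) (aff n w (ivec (k(j := m))) x)) \<partial>count_space UNIV)
        = (\<integral>\<^sup>+ m. E (k(j := m)) * (ennreal (1 / w) * kap g0 (Suc j) (aff n w (ivec k) x)) \<partial>count_space UNIV)"
      by (simp only: e)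
    also have "\<dots> = (\<integral>\<^sup>+ m. E (k(j := m)) \<partial>count_space UNIV) * (ennreal (1 / w) * kap g0 (Suc j) (aff n w (ivec k) x))"
      by (rule nn_integral_multc) simp
    also have "\<dots> = (ennreal (1 / w) * (\<integral>\<^sup>+ m. E (k(j := m)) \<partial>count_space UNIV)) * kap g0 (Suc j) (aff n w (ivec k) x)"
      by (simp add: mult_ac)
    also have "ennreal (1 / w) * (\<integral>\<^sup>+ m. E (k(j := m)) \<partial>count_space UNIV) = epowr (sq P w b (Suc j) k) p"
      using p1 by (simp add: E_def p_def epowr_inv1)
    finally show "(\<integral>\<^sup>+ m. E (k(j := m)) * (ennreal (1 / w) * kap g0 (Suc j) (aff n w (ivec (k(j := m))) x)) \<partial>count_space UNIV)
        = epowr (sq P w b (Suc j) k) p * kap g0 (Suc j) (aff n w (ivec k) x)" .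
  qed
  finally show ?case unfolding qqS .
qed



definition k0 :: "nat \<Rightarrow> nat \<Rightarrow> int" where "k0 n = restrict (\<lambda>_. 0) {..<n}"

lemma Zs_n: "Zs n n = {k0 n}"
  by (auto simp: Zs_def Zn_def k0_def PiE_def extensional_def fun_eq_iff)

lemma main_final:
  assumes g0: "g0 \<in> borel_measurable (sp n)"
    and W0: "\<And>u. u \<in> space (sp n) \<Longrightarrow> (\<integral>\<^sup>+ k. g0 (aff n 1 (ivec k) u) \<partial>count_space (Zn n)) \<le> M"
    and Mfin: "M \<noteq> \<infinity>" and w: "w > 0"
    and P0: "1 \<le> P 0" and Pmono: "\<And>i. Suc i < n \<Longrightarrow> P i \<le> P (Suc i)"
    and H: "H = (\<lambda>x. \<integral>\<^sup>+ k. b k * g0 (aff n w (ivec k) x) \<partial>count_space (Zn n))"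
    and n: "n \<ge> 1" and x: "x \<in> space (sp n)"
  shows "nrm P H n x \<le> epowr M (1 - 1 / P (n - 1)) * epowr (\<integral>\<^sup>+ y. g0 y \<partial>sp n) (1 / P (n - 1))
           * sq P w b n (k0 n)"
proof -
  define p where "p = P (n - 1)"
  have P1: "i < n \<Longrightarrow> 1 \<le> P i" for i
  proof (induction i)
    case 0 then show ?case using P0 by simp
  next
    case (Suc i) then show ?case using Pmono[of i] by simp
  qed
  have p1: "p \<ge> 1" using P1[of "n - 1"] n by (simp add: p_def)
  have qqn: "qq P n = p" using n by (simp add: qq_def p_def)
  define S where "S = sq P w b n (k0 n)"
  define I where "I = (\<integral>\<^sup>+ y. g0 y \<partial>sp n)"
  have "epowr (nrm P H n x) p \<le> epowr M (p - 1) *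
      (\<integral>\<^sup>+ k. epowr (sq P w b n k) p * kap g0 n (aff n w (ivec k) x) \<partial>count_space (Zs n n))"
    using main_ind[OF g0 W0 Mfin w P0 Pmono H order_refl x] unfolding qqn .
  also have "(\<integral>\<^sup>+ k. epowr (sq P w b n k) p * kap g0 n (aff n w (ivec k) x) \<partial>count_space (Zs n n))
      = epowr S p * I"
    by (simp add: Zs_n nn_integral_count_space_finite S_def I_def kap_full[OF g0 aff_space])
  finally have le: "epowr (nrm P H n x) p \<le> epowr M (p - 1) * (epowr S p * I)" .
  have "nrm P H n x = epowr (epowr (nrm P H n x) p) (1 / p)"
    using p1 by (simp add: epowr_inv2)
  also have "\<dots> \<le> epowr (epowr M (p - 1) * (epowr S p * I)) (1 / p)"
    using le p1 by (intro epowr_mono) auto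
  also have "\<dots> = epowr (epowr M (p - 1)) (1 / p) * (epowr (epowr S p) (1 / p) * epowr I (1 / p))"
    using p1 by (simp add: epowr_mult)
  also have "epowr (epowr M (p - 1)) (1 / p) = epowr M (1 - 1 / p)"
    using p1 by (subst epowr_epowr) (auto simp: field_simps)
  also have "epowr (epowr S p) (1 / p) = S"
    using p1 by (simp add: epowr_inv2)
  finally show ?thesis by (simp add: p_def S_def I_def mult_ac)
qed



lemma pt_minus_aff: "pt_minus n u k = aff n 1 (ivec k) u"
  by (simp add: pt_minus_def aff_def ivec_def)

lemma pt_scale_aff: "pt_minus n (pt_scale n w x) k = aff n w (ivec k) x"
  by (simp add: pt_minus_def pt_scale_def aff_def ivec_def fun_eq_iff)

lemma abs_moment0: "abs_moment n 0 K = (SUP u\<in>space (sp n). \<integral>\<^sup>+ k. ennreal \<bar>K (aff n 1 (ivec k) u)\<bar> \<partial>count_space (Zn n))"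
  by (simp add: abs_moment_def Rn_sp pt_minus_aff)

definition kadd :: "nat \<Rightarrow> (nat \<Rightarrow> int) \<Rightarrow> (nat \<Rightarrow> int) \<Rightarrow> (nat \<Rightarrow> int)" where
  "kadd n k k' = restrict (\<lambda>i. k i + k' i) {..<n}"

lemma aff_aff1: "aff n 1 (ivec k') (aff n 1 (ivec k) u) = aff n 1 (ivec (kadd n k k')) u"
  by (auto simp: aff_def ivec_def kadd_def fun_eq_iff)

lemma kadd_bij: "bij_betw (kadd n k) (Zn n) (Zn n)"
proof (rule bij_betwI[where g = "\<lambda>k''. restrict (\<lambda>i. k'' i - k i) {..<n}"])
  show "kadd n k \<in> Zn n \<rightarrow> Zn n" by (auto simp: kadd_def Zn_def)
  show "(\<lambda>k''. restrict (\<lambda>i. k'' i - k i) {..<n}) \<in> Zn n \<rightarrow> Zn n" by (auto simp: Zn_def)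
  show "restrict (\<lambda>i. kadd n k x i - k i) {..<n} = x" if "x \<in> Zn n" for x
    using that by (auto simp: kadd_def Zn_def PiE_def extensional_def fun_eq_iff)
  show "kadd n k (restrict (\<lambda>i. y i - k i) {..<n}) = y" if "y \<in> Zn n" for y
    using that by (auto simp: kadd_def Zn_def PiE_def extensional_def fun_eq_iff)
qed

lemma periodic_sum:
  "(\<integral>\<^sup>+ k'. F (aff n 1 (ivec k') (aff n 1 (ivec k) u)) \<partial>count_space (Zn n))
   = (\<integral>\<^sup>+ k'. F (aff n 1 (ivec k') u) \<partial>count_space (Zn n))"
  unfolding aff_aff1
  by (rule nn_integral_bij_count_space[OF kadd_bij, where f = "\<lambda>k'. F (aff n 1 (ivec k') u)"])

lemma kernel_K3:
  fixes K :: "(nat \<Rightarrow> real) \<Rightarrow> real"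
  assumes Km: "K \<in> borel_measurable (completion (sp n))"
  obtains K3 N3 where "K3 \<in> borel_measurable (sp n)" "N3 \<in> null_sets (sp n)"
    "\<And>u. u \<in> space (sp n) \<Longrightarrow> u \<notin> N3 \<Longrightarrow> K3 u = ennreal \<bar>K u\<bar>"
    "\<And>u. u \<in> space (sp n) \<Longrightarrow> (\<integral>\<^sup>+ k. K3 (aff n 1 (ivec k) u) \<partial>count_space (Zn n)) \<le> abs_moment n 0 K"
proof -
  define M where "M = abs_moment n 0 K"
  obtain K' where K'm: "K' \<in> borel_measurable (sp n)" and ae: "AE x in sp n. K x = K' x"
    using completion_ex_borel_measurable_real[OF Km] by blast
  from ae obtain N0 where N0: "{x \<in> space (sp n). \<not> K x = K' x} \<subseteq> N0" "emeasure (sp n) N0 = 0" "N0 \<in> sets (sp n)"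
    by (rule AE_E)
  have N0n: "N0 \<in> null_sets (sp n)" using N0 by (simp add: null_sets_def)
  define k1 where "k1 u = ennreal \<bar>K' u\<bar>" for u
  have k1m: "k1 \<in> borel_measurable (sp n)" unfolding k1_def using K'm by measurable
  define Per where "Per u = (\<integral>\<^sup>+ k. k1 (aff n 1 (ivec k) u) \<partial>count_space (Zn n))" for u
  have Perm: "Per \<in> borel_measurable (sp n)"
    unfolding Per_def
    by (intro meas_count_sum countable_Zn measurable_comp[OF aff_meas k1m, unfolded comp_def])
  define K3 where "K3 u = (if Per u \<le> M then k1 u else 0)" for u
  have K3m: "K3 \<in> borel_measurable (sp n)"
    unfolding K3_def using Perm k1m by measurable
  define N3 where "N3 = N0 \<union> (\<Union>k\<in>Zn n. {x \<in> space (sp n). aff n 1 (ivec k) x \<in> N0})"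
  have N3n: "N3 \<in> null_sets (sp n)"
    unfolding N3_def
    by (intro null_sets.Un N0n null_sets_UN' countable_Zn aff_null) auto
  have per: "Per (aff n 1 (ivec k) u) = Per u" for k u
    unfolding Per_def by (rule periodic_sum)
  have W: "(\<integral>\<^sup>+ k. K3 (aff n 1 (ivec k) u) \<partial>count_space (Zn n)) \<le> M" if u: "u \<in> space (sp n)" for u
  proof (cases "Per u \<le> M")
    case True
    have "K3 (aff n 1 (ivec k) u) = k1 (aff n 1 (ivec k) u)" for k
      unfolding K3_def per using True by simp
    then have "(\<integral>\<^sup>+ k. K3 (aff n 1 (ivec k) u) \<partial>count_space (Zn n)) = Per u"
      unfolding Per_def by simp
    then show ?thesis using True by simp
  next
    case False
    have "K3 (aff n 1 (ivec k) u) = 0" for k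
      unfolding K3_def per using False by simp
    then show ?thesis by simp
  qed
  have eq: "K3 u = ennreal \<bar>K u\<bar>" if u: "u \<in> space (sp n)" and uN: "u \<notin> N3" for u
  proof -
    have notN: "aff n 1 (ivec k) u \<notin> N0" if "k \<in> Zn n" for k
      using uN that u unfolding N3_def by auto
    have KK: "K y = K' y" if "y \<in> space (sp n)" "y \<notin> N0" for y
      using N0(1) that by auto
    have "Per u = (\<integral>\<^sup>+ k. ennreal \<bar>K (aff n 1 (ivec k) u)\<bar> \<partial>count_space (Zn n))"
      unfolding Per_def k1_def
      by (rule nn_integral_cong) (simp add: KK[OF aff_space notN])
    also have "\<dots> \<le> M"
      unfolding M_def abs_moment0 by (rule SUP_upper[OF u])
    finally have "Per u \<le> M" .
    moreover have "u \<notin> N0" using uN unfolding N3_def by auto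
    ultimately show ?thesis unfolding K3_def k1_def using KK[OF u] by simp
  qed
  show ?thesis
    using that[OF K3m N3n eq] W unfolding M_def by blast
qed



lemma norm2_ge: "i < n \<Longrightarrow> \<bar>x i\<bar> \<le> norm2_n n x"
proof -
  assume i: "i < n"
  have "(x i)\<^sup>2 \<le> (\<Sum>j<n. (x j)\<^sup>2)"
    using i by (intro member_le_sum) auto
  then have "sqrt ((x i)\<^sup>2) \<le> sqrt (\<Sum>j<n. (x j)\<^sup>2)" by (rule real_sqrt_le_mono)
  then show ?thesis by (simp add: norm2_n_def)
qed

lemma moment_finite:
  fixes K :: "(nat \<Rightarrow> real) \<Rightarrow> real"
  assumes \<alpha>: "\<alpha> \<ge> 0" and \<delta>: "\<delta> > 0"
    and bnd: "\<And>u. u \<in> Rn n \<Longrightarrow> (\<forall>i<n. \<bar>u i\<bar> < \<delta>) \<Longrightarrow> \<bar>K u\<bar> \<le> Mb"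
    and fin: "abs_moment n \<alpha> K < \<infinity>"
  shows "abs_moment n 0 K < \<infinity>"
proof (cases "\<alpha> = 0")
  case True then show ?thesis using fin by simp
next
  case False
  then have \<alpha>p: "\<alpha> > 0" using \<alpha> by simp
  define d where "d = min \<delta> (1/2)"
  have d: "d > 0" "d \<le> \<delta>" "d \<le> 1/2" using \<delta> by (auto simp: d_def)
  define Ma where "Ma = abs_moment n \<alpha> K"
  define Mb' where "Mb' = max Mb 0"
  have bound: "(\<integral>\<^sup>+ k. ennreal \<bar>K (aff n 1 (ivec k) u)\<bar> \<partial>count_space (Zn n))
      \<le> ennreal Mb' + ennreal (1 / d powr \<alpha>) * Ma" if u: "u \<in> space (sp n)" for u
  proof -
    define v where "v k = aff n 1 (ivec k) u" for k
    define S where "S = {k \<in> Zn n. \<forall>i<n. \<bar>v k i\<bar> < d}"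
    have vsp: "v k \<in> Rn n" for k by (simp add: v_def Rn_sp)
    have pw: "ennreal \<bar>K (v k)\<bar> \<le> ennreal Mb' * indicator S k
        + ennreal (1 / d powr \<alpha>) * ennreal (\<bar>K (v k)\<bar> * (if \<alpha> = 0 then 1 else norm2_n n (v k) powr \<alpha>))"
      if k: "k \<in> Zn n" for k
    proof (cases "k \<in> S")
      case True
      then have "\<bar>K (v k)\<bar> \<le> Mb" using bnd[OF vsp] d unfolding S_def by force
      then have "ennreal \<bar>K (v k)\<bar> \<le> ennreal Mb'" by (intro ennreal_leI) (simp add: Mb'_def)
      then show ?thesis using True by (simp add: add_increasing2)
    next
      case False
      then obtain i where i: "i < n" "\<bar>v k i\<bar> \<ge> d" using k unfolding S_def by force
      have nd: "norm2_n n (v k) \<ge> d" using norm2_ge[OF i(1), of "v k"] i by simp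
      have "d powr \<alpha> \<le> norm2_n n (v k) powr \<alpha>" using nd d \<alpha> by (intro powr_mono2) auto
      then have "1 \<le> norm2_n n (v k) powr \<alpha> / d powr \<alpha>" using d by simp
      then have "\<bar>K (v k)\<bar> \<le> 1 / d powr \<alpha> * (\<bar>K (v k)\<bar> * norm2_n n (v k) powr \<alpha>)"
        by (smt (verit, best) abs_ge_zero mult_cancel_left1 mult_left_mono times_divide_eq_left
                divide_inverse mult.commute mult.left_commute)
      then have "ennreal \<bar>K (v k)\<bar> \<le> ennreal (1 / d powr \<alpha>) * ennreal (\<bar>K (v k)\<bar> * norm2_n n (v k) powr \<alpha>)"
        by (simp add: ennreal_mult''[symmetric] ennreal_leI)
      then show ?thesis using False \<alpha>p by (simp add: add_increasing)
    qed
    have S1: "(\<integral>\<^sup>+ k. indicator S k \<partial>count_space (Zn n)) \<le> 1"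
    proof (cases "S = {}")
      case True then show ?thesis by simp
    next
      case False
      then obtain k where k: "k \<in> S" by blast
      have uniq: "k' = k" if "k' \<in> S" for k'
      proof
        fix i
        show "k' i = k i"
        proof (cases "i < n")
          case True
          have "\<bar>u i - k' i\<bar> < 1/2" "\<bar>u i - k i\<bar> < 1/2"
            using that k True d unfolding S_def v_def by (auto simp: aff_def ivec_def)
          then have "\<bar>real_of_int (k' i) - real_of_int (k i)\<bar> < 1" by linarith
          then show ?thesis by linarith
        next
          case False
          then show ?thesis using that k unfolding S_def Zn_def by (auto simp: PiE_def extensional_def)
        qed
      qed
      then have "S = {k}" using k by blast
      moreover have "k \<in> Zn n" using k by (simp add: S_def)
      ultimately show ?thesis
        by (subst nn_integral_count_space'[where A = "{k}"]) auto
    qed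
    have "(\<integral>\<^sup>+ k. ennreal \<bar>K (v k)\<bar> \<partial>count_space (Zn n))
       \<le> (\<integral>\<^sup>+ k. ennreal Mb' * indicator S k
        + ennreal (1 / d powr \<alpha>) * ennreal (\<bar>K (v k)\<bar> * (if \<alpha> = 0 then 1 else norm2_n n (v k) powr \<alpha>)) \<partial>count_space (Zn n))"
      by (intro nn_integral_mono pw) simp
    also have "\<dots> = ennreal Mb' * (\<integral>\<^sup>+ k. indicator S k \<partial>count_space (Zn n))
        + ennreal (1 / d powr \<alpha>) * (\<integral>\<^sup>+ k. ennreal (\<bar>K (v k)\<bar> * (if \<alpha> = 0 then 1 else norm2_n n (v k) powr \<alpha>)) \<partial>count_space (Zn n))"
      by (simp add: nn_integral_add nn_integral_cmult)
    also have "\<dots> \<le> ennreal Mb' * 1 + ennreal (1 / d powr \<alpha>) * Ma"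
    proof (intro add_mono mult_left_mono S1)
      show "(\<integral>\<^sup>+ k. ennreal (\<bar>K (v k)\<bar> * (if \<alpha> = 0 then 1 else norm2_n n (v k) powr \<alpha>)) \<partial>count_space (Zn n)) \<le> Ma"
        unfolding Ma_def abs_moment_def v_def pt_minus_aff[symmetric]
        using u by (intro SUP_upper) (simp add: Rn_sp)
    qed auto
    finally show ?thesis by (simp add: v_def)
  qed
  have "abs_moment n 0 K \<le> ennreal Mb' + ennreal (1 / d powr \<alpha>) * Ma"
    unfolding abs_moment0 by (intro SUP_least bound)
  also have "\<dots> < \<infinity>" using fin unfolding Ma_def by (simp add: ennreal_mult_less_top)
  finally show ?thesis .
qed

lemma completion_AE_meas:
  fixes f g :: "'a \<Rightarrow> real"
  assumes f: "f \<in> borel_measurable (completion M)" and N: "N \<in> null_sets M"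
    and eq: "\<And>x. x \<in> space M \<Longrightarrow> x \<notin> N \<Longrightarrow> g x = f x"
  shows "g \<in> borel_measurable (completion M)"
proof (rule measurableI)
  fix A :: "real set" assume A: "A \<in> sets borel"
  have "g -` A \<inter> space (completion M) = (f -` A \<inter> space (completion M) - N) \<union> (g -` A \<inter> space M \<inter> N)"
    using eq by auto
  moreover have "f -` A \<inter> space (completion M) - N \<in> sets (completion M)"
    using measurable_sets[OF f A] N by (intro sets.Diff) auto
  moreover have "g -` A \<inter> space M \<inter> N \<in> sets (completion M)"
  proof -
    have "g -` A \<inter> space M \<inter> N \<in> null_sets (completion M)"
      by (rule null_sets_completion_subset[of _ N]) (use N in \<open>auto intro: null_sets_completionI\<close>)
    then show ?thesis by auto
  qed
  ultimately show "g -` A \<inter> space (completion M) \<in> sets (completion M)"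
    by (metis sets.Un)
qed simp



lemma infsum_integrable:
  fixes g :: "'a \<Rightarrow> real"
  assumes fin: "(\<integral>\<^sup>+ k. ennreal \<bar>g k\<bar> \<partial>count_space A) < \<infinity>"
  shows "integrable (count_space A) g" "infsum g A = integral\<^sup>L (count_space A) g"
proof -
  show int: "integrable (count_space A) g"
    using fin by (simp add: integrable_iff_bounded)
  have "infsum g A = infsetsum g A"
    by (rule infsetsum_infsum[symmetric]) (simp add: Infinite_Set_Sum.abs_summable_on_def int)
  then show "infsum g A = integral\<^sup>L (count_space A) g" by (simp add: infsetsum_def)
qed

lemma infsum_abs_le:
  fixes g :: "'a \<Rightarrow> real"
  shows "ennreal \<bar>infsum g A\<bar> \<le> (\<integral>\<^sup>+ k. ennreal \<bar>g k\<bar> \<partial>count_space A)"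
proof (cases "(\<integral>\<^sup>+ k. ennreal \<bar>g k\<bar> \<partial>count_space A) < \<infinity>")
  case False then show ?thesis by (simp add: not_less top_unique)
next
  case True
  note int = infsum_integrable[OF True]
  have "\<bar>infsum g A\<bar> \<le> integral\<^sup>L (count_space A) (\<lambda>k. \<bar>g k\<bar>)"
    unfolding int(2) using integral_norm_bound[of "count_space A" g] by simp
  then have "ennreal \<bar>infsum g A\<bar> \<le> ennreal (integral\<^sup>L (count_space A) (\<lambda>k. \<bar>g k\<bar>))"
    by (rule ennreal_leI)
  also have "\<dots> = (\<integral>\<^sup>+ k. ennreal \<bar>g k\<bar> \<partial>count_space A)"
    using int(1) by (intro nn_integral_eq_integral[symmetric]) auto
  finally show ?thesis .
qed

lemma infsum_decomp:
  fixes g :: "'a \<Rightarrow> real"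
  assumes fin: "(\<integral>\<^sup>+ k. ennreal \<bar>g k\<bar> \<partial>count_space A) < \<infinity>"
  shows "infsum g A = enn2real (\<integral>\<^sup>+ k. ennreal (g k) \<partial>count_space A) - enn2real (\<integral>\<^sup>+ k. ennreal (- g k) \<partial>count_space A)"
  using infsum_integrable[OF fin] real_lebesgue_integral_def by simp

lemma K_aff_meas:
  fixes K :: "(nat \<Rightarrow> real) \<Rightarrow> real"
  assumes Km: "K \<in> borel_measurable (completion (sp n))" and c: "c > 0"
  shows "(\<lambda>x. K (aff n c v x)) \<in> borel_measurable (completion (sp n))"
proof -
  obtain K' where K'm: "K' \<in> borel_measurable (sp n)" and ae: "AE x in sp n. K x = K' x"
    using completion_ex_borel_measurable_real[OF Km] by blast
  from ae obtain N0 where N0: "{x \<in> space (sp n). \<not> K x = K' x} \<subseteq> N0" "emeasure (sp n) N0 = 0" "N0 \<in> sets (sp n)"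
    by (rule AE_E)
  have N0n: "N0 \<in> null_sets (sp n)" using N0 by (simp add: null_sets_def)
  have fm: "(\<lambda>x. K' (aff n c v x)) \<in> borel_measurable (completion (sp n))"
    by (rule measurable_completion) (rule measurable_comp[OF aff_meas K'm, unfolded comp_def])
  show ?thesis
  proof (rule completion_AE_meas[OF fm aff_null[OF N0n c, of v]])
    fix x assume "x \<in> space (sp n)" "x \<notin> {x \<in> space (sp n). aff n c v x \<in> N0}"
    then have "aff n c v x \<notin> N0" by simp
    then show "K (aff n c v x) = K' (aff n c v x)" using N0(1) aff_space by blast
  qed
qed

lemma lat_div_Rn: "lat_div n w k \<in> Rn n"
  by (simp add: lat_div_def Rn_def)

lemma rel_sep_lat:
  assumes w: "w > 0"
  shows "rel_separated n (lat_div n w)"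
  unfolding rel_separated_def
proof (intro conjI ballI exI[of _ "2 / w"])
  show "lat_div n w k \<in> Rn n" for k by (rule lat_div_Rn)
  show "0 < 2 / w" using w by simp
  have cube_iff: "x \<in> cube n (lat_div n w k) (2 / w / 2) \<longleftrightarrow> x \<in> Rn n \<and> (\<forall>i<n. \<bar>w * x i - k i\<bar> < 1)" for x k
  proof -
    have "\<bar>x i - real_of_int (k i) / w\<bar> < 1 / w \<longleftrightarrow> \<bar>w * x i - k i\<bar> < 1" for i
    proof -
      have "\<bar>x i - real_of_int (k i) / w\<bar> = \<bar>w * x i - k i\<bar> / w"
        using w by (simp add: field_simps abs_div_pos[symmetric])
      then show ?thesis using w by (simp add: divide_less_cancel)
    qed
    then show ?thesis by (auto simp: cube_def lat_div_def)
  qed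
  show "1 \<le> (\<integral>\<^sup>+ k. indicator (cube n (lat_div n w k) (2 / w / 2)) x \<partial>count_space (Zn n))"
    if x: "x \<in> Rn n" for x
  proof -
    define ks where "ks = restrict (\<lambda>i. round (w * x i)) {..<n}"
    have ks: "ks \<in> Zn n" by (simp add: ks_def Zn_def)
    have "\<forall>i<n. \<bar>w * x i - ks i\<bar> < 1"
    proof (intro allI impI)
      fix i assume "i < n"
      then have "\<bar>w * x i - ks i\<bar> \<le> 1/2" using of_int_round_abs_le[of "w * x i"]
        by (simp add: ks_def abs_minus_commute)
      then show "\<bar>w * x i - ks i\<bar> < 1" by simp
    qed
    then have xin: "x \<in> cube n (lat_div n w ks) (2 / w / 2)"
      using x cube_iff by simp
    have "(1::ennreal) = (\<integral>\<^sup>+ k. indicator {ks} k \<partial>count_space (Zn n))"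
      using ks by (subst nn_integral_count_space'[where A = "{ks}"]) auto
    also have "\<dots> \<le> (\<integral>\<^sup>+ k. indicator (cube n (lat_div n w k) (2 / w / 2)) x \<partial>count_space (Zn n))"
      using xin by (intro nn_integral_mono) (auto simp: indicator_def split: if_splits)
    finally show ?thesis .
  qed
  show "(SUP x\<in>Rn n. \<integral>\<^sup>+ k. indicator (cube n (lat_div n w k) (2 / w / 2)) x \<partial>count_space (Zn n)) < \<infinity>"
  proof -
    have "(\<integral>\<^sup>+ k. indicator (cube n (lat_div n w k) (2 / w / 2)) x \<partial>count_space (Zn n)) \<le> of_nat (3 ^ n)"
      if x: "x \<in> Rn n" for x
    proof -
      define T where "T = PiE {..<n} (\<lambda>i. {\<lfloor>w * x i\<rfloor> - 1 .. \<lfloor>w * x i\<rfloor> + 1})"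
      have T: "finite T" "T \<subseteq> Zn n" by (auto simp: T_def Zn_def intro!: finite_PiE)
      have cardT: "card T = 3 ^ n"
        unfolding T_def by (simp add: card_PiE)
      have "(\<integral>\<^sup>+ k. indicator (cube n (lat_div n w k) (2 / w / 2)) x \<partial>count_space (Zn n))
          \<le> (\<integral>\<^sup>+ k. indicator T k \<partial>count_space (Zn n))"
      proof (intro nn_integral_mono)
        fix k assume "k \<in> space (count_space (Zn n))"
        then have k: "k \<in> Zn n" by simp
        have "k \<in> T" if "x \<in> cube n (lat_div n w k) (2 / w / 2)"
        proof -
          have "\<forall>i<n. \<bar>w * x i - k i\<bar> < 1" using that cube_iff by blast
          then have "\<forall>i<n. k i \<in> {\<lfloor>w * x i\<rfloor> - 1 .. \<lfloor>w * x i\<rfloor> + 1}"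
          proof (intro allI impI)
            fix i assume "\<forall>i<n. \<bar>w * x i - k i\<bar> < 1" "i < n"
            then have h: "w * x i - k i < 1" "k i - w * x i < 1" by (auto simp: abs_less_iff)
            have "\<lfloor>w * x i\<rfloor> \<le> k i + 1" unfolding floor_le_iff using h by simp
            moreover have "k i - 1 \<le> \<lfloor>w * x i\<rfloor>" unfolding le_floor_iff using h by simp
            ultimately show "k i \<in> {\<lfloor>w * x i\<rfloor> - 1 .. \<lfloor>w * x i\<rfloor> + 1}" by simp
          qed
          then show ?thesis using k by (auto simp: T_def Zn_def PiE_def)
        qed
        then show "indicator (cube n (lat_div n w k) (2 / w / 2)) x \<le> (indicator T k :: ennreal)"
          by (auto simp: indicator_def)
      qed
      also have "\<dots> = (\<Sum>k\<in>T. 1)"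
        using T by (subst nn_integral_count_space'[where A = T]) auto
      also have "\<dots> = of_nat (3 ^ n)" using cardT by simp
      finally show ?thesis .
    qed
    then have "(SUP x\<in>Rn n. \<integral>\<^sup>+ k. indicator (cube n (lat_div n w k) (2 / w / 2)) x \<partial>count_space (Zn n)) \<le> of_nat (3 ^ n)"
      by (intro SUP_least) auto
    also have "\<dots> < \<infinity>" by (metis ennreal_of_nat_eq_real_of_nat ennreal_less_top infinity_ennreal_def)
    finally show ?thesis .
  qed
qed



theorem theorem3p4:
  fixes n :: nat and w \<alpha> :: real and P :: "nat \<Rightarrow> real"
    and K f :: "(nat \<Rightarrow> real) \<Rightarrow> real"
  assumes "n \<ge> 1" and "w > 0" and "\<alpha> \<ge> 0"
    and "1 \<le> P 0"
    and "\<And>i. Suc i < n \<Longrightarrow> P i \<le> P (Suc i)"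
    and "is_kernel n \<alpha> K"
    and "Delta n P w f"
  shows "in_LP n P (sampling n w K f) \<and>
         mixnorm n P (sampling n w K f)
           \<le> epowr (abs_moment n 0 K) (1 - 1 / P (n - 1)) * epowr (L1norm n K) (1 / P (n - 1))
             * seqnorm n P w (\<lambda>k. f (lat_div n w k))"
proof -
  note n = assms(1) and w = assms(2) and \<alpha> = assms(3) and P0 = assms(4) and Pmono = assms(5)
  have Kint: "integrable (lebesgue_n n) K"
    and Kbnd: "\<exists>\<delta>>0. \<exists>M. \<forall>u\<in>Rn n. (\<forall>i<n. \<bar>u i\<bar> < \<delta>) \<longrightarrow> \<bar>K u\<bar> \<le> M"
    and Kmom: "abs_moment n \<alpha> K < \<infinity>"
    using assms(6) unfolding is_kernel_def by auto
  have Km: "K \<in> borel_measurable (completion (sp n))"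
    using borel_measurable_integrable[OF Kint] by (simp add: lebesgue_n_def)
  obtain \<delta> Mb where \<delta>: "\<delta> > 0" and bnd: "\<And>u. u \<in> Rn n \<Longrightarrow> (\<forall>i<n. \<bar>u i\<bar> < \<delta>) \<Longrightarrow> \<bar>K u\<bar> \<le> Mb"
    using Kbnd by blast
  define M where "M = abs_moment n 0 K"
  have Mfin: "M < \<infinity>" unfolding M_def by (rule moment_finite[OF \<alpha> \<delta> bnd Kmom])
  obtain Bf where Bf: "\<And>x. x \<in> Rn n \<Longrightarrow> \<bar>f x\<bar> \<le> Bf"
    using assms(7) unfolding Delta_def by blast
  have seqfin: "seqnorm n P w (\<lambda>k. f (lat_div n w k)) < \<infinity>"
    using assms(7) rel_sep_lat[OF w, of n] unfolding Delta_def by blast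
  have L1fin: "L1norm n K < \<infinity>"
    using Kint by (simp add: integrable_iff_bounded L1norm_def)
  have P1: "i < n \<Longrightarrow> 1 \<le> P i" for i
  proof (induction i)
    case 0 then show ?case using P0 by simp
  next
    case (Suc i) then show ?case using Pmono[of i] by simp
  qed
  have Ppos: "i < n \<Longrightarrow> P i > 0" for i using P1[of i] by simp
  obtain K3 N3 where K3m: "K3 \<in> borel_measurable (sp n)" and N3: "N3 \<in> null_sets (sp n)"
    and K3eq: "\<And>u. u \<in> space (sp n) \<Longrightarrow> u \<notin> N3 \<Longrightarrow> K3 u = ennreal \<bar>K u\<bar>"
    and W0: "\<And>u. u \<in> space (sp n) \<Longrightarrow> (\<integral>\<^sup>+ k. K3 (aff n 1 (ivec k) u) \<partial>count_space (Zn n)) \<le> M"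
    using kernel_K3[OF Km] unfolding M_def by metis
  define b where "b k = ennreal \<bar>f (lat_div n w k)\<bar>" for k
  define H3 where "H3 = (\<lambda>x. \<integral>\<^sup>+ k. b k * K3 (aff n w (ivec k) x) \<partial>count_space (Zn n))"
  define gx where "gx x k = f (lat_div n w k) * K (aff n w (ivec k) x)" for x k
  define Hs where "Hs x = (\<integral>\<^sup>+ k. ennreal \<bar>gx x k\<bar> \<partial>count_space (Zn n))" for x
  have samp: "sampling n w K f x = infsum (gx x) (Zn n)" for x
    by (simp add: sampling_def gx_def[abs_def] pt_scale_aff)
  have le1: "ennreal \<bar>sampling n w K f x\<bar> \<le> Hs x" for x
    unfolding samp Hs_def by (rule infsum_abs_le)
  define NH where "NH = (\<Union>k\<in>Zn n. {x \<in> space (sp n). aff n w (ivec k) x \<in> N3})"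
  have NH: "NH \<in> null_sets (sp n)"
    unfolding NH_def by (intro null_sets_UN' countable_Zn aff_null[OF N3 w])
  have HsH3: "Hs y = H3 y" if y: "y \<in> space (sp n)" "y \<notin> NH" for y
    unfolding Hs_def H3_def
  proof (rule nn_integral_cong)
    fix k assume "k \<in> space (count_space (Zn n))"
    then have k: "k \<in> Zn n" by simp
    have "aff n w (ivec k) y \<notin> N3" using y k unfolding NH_def by auto
    then have "K3 (aff n w (ivec k) y) = ennreal \<bar>K (aff n w (ivec k) y)\<bar>"
      using K3eq aff_space by blast
    then show "ennreal \<bar>gx y k\<bar> = b k * K3 (aff n w (ivec k) y)"
      by (simp add: gx_def b_def abs_mult ennreal_mult'')
  qed
  have mix_le: "mixnorm n P (sampling n w K f) \<le> nrm P H3 n (u0 n)"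
  proof -
    have "mixnorm n P (sampling n w K f) = nrm P (\<lambda>y. ennreal \<bar>sampling n w K f y\<bar>) n (u0 n)"
      by (simp add: mixnorm_def mixnorm_aux_nrm u0_def)
    also have "\<dots> \<le> nrm P H3 n (u0 n)"
    proof (rule ae_mono_full[OF NH _ Ppos u0_space])
      fix y assume "y \<in> space (sp n)" "y \<notin> NH"
      then show "ennreal \<bar>sampling n w K f y\<bar> \<le> H3 y" using le1[of y] HsH3 by simp
    qed
    finally show ?thesis .
  qed
  have fin_bound: "nrm P H3 n (u0 n) \<le> epowr M (1 - 1 / P (n - 1)) * epowr (\<integral>\<^sup>+ y. K3 y \<partial>sp n) (1 / P (n - 1))
           * sq P w b n (k0 n)"
    by (rule main_final[OF K3m W0 _ w P0 Pmono H3_def n u0_space]) (use Mfin in auto)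
  have intK3: "(\<integral>\<^sup>+ y. K3 y \<partial>sp n) = L1norm n K"
  proof -
    have "L1norm n K = (\<integral>\<^sup>+ x. ennreal \<bar>K x\<bar> \<partial>sp n)"
      by (simp add: L1norm_def lebesgue_n_def nn_integral_completion)
    also have "\<dots> = (\<integral>\<^sup>+ y. K3 y \<partial>sp n)"
    proof (rule nn_integral_cong_AE)
      show "AE x in sp n. ennreal \<bar>K x\<bar> = K3 x"
        using AE_not_in[OF N3] AE_space by eventually_elim (simp add: K3eq)
    qed
    finally show ?thesis by simp
  qed
  have sqeq: "sq P w b n (k0 n) = seqnorm n P w (\<lambda>k. f (lat_div n w k))"
    by (simp add: seqnorm_def seqnorm_aux_sq b_def[abs_def] k0_def)
  have main: "mixnorm n P (sampling n w K f)
           \<le> epowr (abs_moment n 0 K) (1 - 1 / P (n - 1)) * epowr (L1norm n K) (1 / P (n - 1))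
             * seqnorm n P w (\<lambda>k. f (lat_div n w k))"
    using mix_le fin_bound unfolding intK3 sqeq M_def by (rule order_trans)
  have rhs_fin: "epowr (abs_moment n 0 K) (1 - 1 / P (n - 1)) * epowr (L1norm n K) (1 / P (n - 1))
             * seqnorm n P w (\<lambda>k. f (lat_div n w k)) < \<infinity>"
    using epowr_less_top[OF Mfin[unfolded M_def]] epowr_less_top[OF L1fin] seqfin
    by (simp add: ennreal_mult_less_top)
  have Hsfin: "Hs x < \<infinity>" if x: "x \<in> space (sp n)" for x
  proof -
    define Bf' where "Bf' = max Bf 0"
    have "Hs x \<le> (\<integral>\<^sup>+ k. ennreal Bf' * ennreal \<bar>K (aff n 1 (ivec k) (aff n w (\<lambda>_. 0) x))\<bar> \<partial>count_space (Zn n))"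
      unfolding Hs_def
    proof (rule nn_integral_mono)
      fix k
      have "\<bar>f (lat_div n w k)\<bar> \<le> Bf'" unfolding Bf'_def using Bf[OF lat_div_Rn[of n w k]] by linarith
      then have "\<bar>gx x k\<bar> \<le> Bf' * \<bar>K (aff n w (ivec k) x)\<bar>"
        by (simp add: gx_def abs_mult mult_right_mono)
      then show "ennreal \<bar>gx x k\<bar> \<le> ennreal Bf' * ennreal \<bar>K (aff n 1 (ivec k) (aff n w (\<lambda>_. 0) x))\<bar>"
        by (simp add: aff_comp[symmetric] ennreal_mult''[symmetric] Bf'_def ennreal_leI)
    qed
    also have "\<dots> = ennreal Bf' * (\<integral>\<^sup>+ k. ennreal \<bar>K (aff n 1 (ivec k) (aff n w (\<lambda>_. 0) x))\<bar> \<partial>count_space (Zn n))"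
      by (rule nn_integral_cmult) simp
    also have "\<dots> \<le> ennreal Bf' * M"
      unfolding M_def abs_moment0 by (intro mult_left_mono SUP_upper aff_space) simp
    also have "\<dots> < \<infinity>" using Mfin by (simp add: ennreal_mult_less_top)
    finally show ?thesis .
  qed
  define Fp where "Fp x = (\<integral>\<^sup>+ k. ennreal (gx x k) \<partial>count_space (Zn n))" for x
  define Fn where "Fn x = (\<integral>\<^sup>+ k. ennreal (- gx x k) \<partial>count_space (Zn n))" for x
  have gxm: "(\<lambda>x. gx x k) \<in> borel_measurable (completion (sp n))" for k
    unfolding gx_def using K_aff_meas[OF Km w, of "ivec k"] by measurable
  have Fpm: "Fp \<in> borel_measurable (completion (sp n))"
    unfolding Fp_def by (intro meas_count_sum countable_Zn) (use gxm in measurable)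
  have Fnm: "Fn \<in> borel_measurable (completion (sp n))"
    unfolding Fn_def by (intro meas_count_sum countable_Zn) (use gxm in measurable)
  have "(\<lambda>x. enn2real (Fp x) - enn2real (Fn x)) \<in> borel_measurable (completion (sp n))"
    using Fpm Fnm by measurable
  moreover have "sampling n w K f x = enn2real (Fp x) - enn2real (Fn x)" if "x \<in> space (completion (sp n))" for x
    unfolding samp Fp_def Fn_def
    by (rule infsum_decomp) (use Hsfin[of x] that in \<open>simp add: Hs_def\<close>)
  ultimately have "sampling n w K f \<in> borel_measurable (completion (sp n))"
    by (subst measurable_cong) auto
  then have "in_LP n P (sampling n w K f)"
    unfolding in_LP_def lebesgue_n_def using main rhs_fin by (simp add: order_le_less_trans)
  then show ?thesis using main by simp
qed

end
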